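(* Let $\pi_1,\pi_2,\pi_3$ be Borel probability measures on $\mathbb{R}_+=[0,\infty)$ and let $\mu=\pi_1\times\pi_2\times\pi_3$ on $\mathbb{R}_+^3$. Let $R:\mathbb{R}_+^3\to\mathbb{R}_+^3$ be $$R(r,s,t)=\bigl(t+[r-s]^+,\;t+[s-r]^+,\;r\wedge s\bigr),$$ and suppose that $R\mu=\mu$, where $R\mu$ is the push-forward of $\mu$ under $R$. Let $\tilde U_i=\mathrm{supp}(\pi_i)$, $t_0=\min\tilde U_3$, $U_i=\tilde U_i-t_0$ and $F_i(t)=\pi_i\bigl([t_0+t,\infty)\bigr)$ for $i=1,2,3$. Then exactly one of the following holds: (1) $U_3=\{0\}$; (2) $U_1=U_2=U_3=\mathbb{R}_+$, and there are $\alpha_1,\alpha_2\in(0,\infty)$ such that $F_i(t)=e^{-\alpha_i t}$ for $t\ge 0$ and $i=1,2,3$, where $\alpha_3=\alpha_1+\alpha_2$; (3) there is $c>0$ such that $U_1=U_2=U_3=c\mathbb{Z}_+$, and there are $\lambda_1,\lambda_2\in(0,1)$ such that $F_i(cn)=\lambda_i^n$ for $n\in\mathbb{Z}_+$ and $i=1,2,3$, where $\lambda_3=\lambda_1\lambda_2$.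
   Context: $\mathrm{supp}(\pi)$ denotes the support of $\pi$, i.e. the intersection of all closed sets of full $\pi$-measure. $\mathbb{Z}_+=\{0,1,2,\dots\}$ and $[a]^+=\max(a,0)$. Interpretation (not needed for the statement): $r$ and $s$ are the masses of ascending and descending particles entering a site, $t$ is the mass born there, and $R\mu=\mu$ is the self-duality (time-reversibility) condition for the broken line process. *)

theory Defs
  imports "HOL-Probability.Probability"
begin

definition msupp :: "real measure \<Rightarrow> real set" where
  "msupp M = \<Inter> {C. closed C \<and> emeasure M C = emeasure M (space M)}"

definition Rmap :: "real \<times> real \<times> real \<Rightarrow> real \<times> real \<times> real" where
  "Rmap = (\<lambda>(r, s, t). (t + max (r - s) 0, t + max (s - r) 0, min r s))"

text \<open>A Borel probability measure on [0,infinity), represented on the real line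
  with all mass on [0,infinity).\<close>
definition prob_on_nonneg :: "real measure \<Rightarrow> bool" where
  "prob_on_nonneg M \<longleftrightarrow> prob_space M \<and> sets M = sets borel \<and> emeasure M {..<0} = 0"

end

theory Submission
  imports Defs
begin

lemma pon_prob: "prob_on_nonneg M \<Longrightarrow> prob_space M"
  by (simp add: prob_on_nonneg_def)
lemma pon_sets: "prob_on_nonneg M \<Longrightarrow> sets M = sets borel"
  by (simp add: prob_on_nonneg_def)
lemma pon_space: "prob_on_nonneg M \<Longrightarrow> space M = UNIV"
  using sets_eq_imp_space_eq[OF pon_sets] by simp
lemma pon_neg: "prob_on_nonneg M \<Longrightarrow> emeasure M {..<0} = 0"
  by (simp add: prob_on_nonneg_def)
lemma pon_borel: "prob_on_nonneg M \<Longrightarrow> A \<in> sets borel \<Longrightarrow> A \<in> sets M"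
  by (simp add: pon_sets)

lemma not_msupp_iff:
  assumes "prob_on_nonneg M"
  shows "x \<notin> msupp M \<longleftrightarrow> (\<exists>V. open V \<and> x \<in> V \<and> emeasure M V = 0)"
proof
  interpret prob_space M using pon_prob[OF assms] .
  have sp: "space M = UNIV" using pon_space[OF assms] .
  assume "x \<notin> msupp M"
  then obtain C where C: "closed C" "emeasure M C = emeasure M (space M)" "x \<notin> C"
    unfolding msupp_def by auto
  have Cs: "C \<in> sets M" using C(1) pon_borel[OF assms] by auto
  have "emeasure M (space M - C) = emeasure M (space M) - emeasure M C"
    using Cs by (simp add: emeasure_compl)
  also have "\<dots> = 0" using C(2) by simp
  finally show "\<exists>V. open V \<and> x \<in> V \<and> emeasure M V = 0"
    using C by (intro exI[of _ "- C"]) (auto simp: sp Compl_eq_Diff_UNIV)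
next
  interpret prob_space M using pon_prob[OF assms] .
  have sp: "space M = UNIV" using pon_space[OF assms] .
  assume "\<exists>V. open V \<and> x \<in> V \<and> emeasure M V = 0"
  then obtain V where V: "open V" "x \<in> V" "emeasure M V = 0" by auto
  have Vs: "V \<in> sets M" using V(1) pon_borel[OF assms] by auto
  have "emeasure M (space M - V) = emeasure M (space M) - emeasure M V"
    using Vs by (simp add: emeasure_compl)
  then have "emeasure M (- V) = emeasure M (space M)" using V(3) by (simp add: sp Compl_eq_Diff_UNIV)
  moreover have "closed (- V)" using V(1) by auto
  ultimately show "x \<notin> msupp M" using V(2) unfolding msupp_def by auto
qed

lemma msupp_pos:
  assumes "prob_on_nonneg M" "x \<in> msupp M" "open V" "x \<in> V"
  shows "emeasure M V > 0"
  using not_msupp_iff[OF assms(1), of x] assms(2-4) by (auto simp: zero_less_iff_neq_zero)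

lemma closed_msupp: "closed (msupp M)"
  unfolding msupp_def by (rule closed_Inter) auto

lemma msupp_nonneg:
  assumes "prob_on_nonneg M" shows "msupp M \<subseteq> {0..}"
proof
  interpret prob_space M using pon_prob[OF assms] .
  have sp: "space M = UNIV" using pon_space[OF assms] .
  fix x assume x: "x \<in> msupp M"
  show "x \<in> {0..}"
  proof (rule ccontr)
    assume "x \<notin> {0..}"
    then have "x \<in> {..<0}" by auto
    then have "emeasure M {..<0} > 0" using msupp_pos[OF assms x, of "{..<0}"] by auto
    with pon_neg[OF assms] show False by simp
  qed
qed

lemma msupp_compl_null:
  assumes "prob_on_nonneg M" shows "emeasure M (- msupp M) = 0"
proof -
  let ?F = "{V. open V \<and> emeasure M V = 0}"
  have U: "\<Union>?F = - msupp M" using not_msupp_iff[OF assms] by blast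
  obtain F' where F': "F' \<subseteq> ?F" "countable F'" "\<Union>F' = \<Union>?F"
    using Lindelof[of ?F] by auto
  have "(\<Union>V\<in>F'. V) \<in> null_sets M"
    using F'(1,2) pon_borel[OF assms] by (intro null_sets_UN') (auto simp: null_sets_def)
  then show ?thesis using F'(3) U by auto
qed

lemma AE_msupp:
  assumes "prob_on_nonneg M" shows "AE x in M. x \<in> msupp M"
proof -
  have "- msupp M \<in> null_sets M"
    using msupp_compl_null[OF assms] closed_msupp pon_borel[OF assms] by auto
  then show ?thesis
    by (rule AE_I') (auto simp: pon_space[OF assms])
qed

lemma msupp_nonempty:
  assumes "prob_on_nonneg M" shows "msupp M \<noteq> {}"
proof
  interpret prob_space M using pon_prob[OF assms] .
  assume "msupp M = {}"
  then have "emeasure M UNIV = 0" using msupp_compl_null[OF assms] by simp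
  then show False using emeasure_space_1 pon_space[OF assms] by simp
qed

lemma Rmap_alt: "Rmap x = (snd (snd x) + max (fst x - fst (snd x)) 0, snd (snd x) + max (fst (snd x) - fst x) 0, min (fst x) (fst (snd x)))"
  by (cases x) (auto simp: Rmap_def)

lemma Rmap_simp[simp]: "Rmap (r, s, t) = (t + max (r - s) 0, t + max (s - r) 0, min r s)"
  by (simp add: Rmap_def)

lemma Rmap_cont: "continuous (at x) Rmap"
  unfolding Rmap_alt[abs_def] by (intro continuous_intros)

lemma Rmap_borel: "Rmap \<in> borel_measurable borel"
  by (rule borel_measurable_continuous_onI) (simp add: continuous_at_imp_continuous_on Rmap_cont)

locale bl =
  fixes p1 p2 p3 :: "real measure"
  assumes h1: "prob_on_nonneg p1" and h2: "prob_on_nonneg p2" and h3: "prob_on_nonneg p3"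
  assumes hR: "distr (p1 \<Otimes>\<^sub>M (p2 \<Otimes>\<^sub>M p3)) (p1 \<Otimes>\<^sub>M (p2 \<Otimes>\<^sub>M p3)) Rmap
               = p1 \<Otimes>\<^sub>M (p2 \<Otimes>\<^sub>M p3)"
begin

abbreviation "P \<equiv> p1 \<Otimes>\<^sub>M (p2 \<Otimes>\<^sub>M p3)"

sublocale q1: prob_space p1 using pon_prob[OF h1] .
sublocale q2: prob_space p2 using pon_prob[OF h2] .
sublocale q3: prob_space p3 using pon_prob[OF h3] .
sublocale q23: pair_prob_space p2 p3 ..
sublocale q123: pair_prob_space p1 "p2 \<Otimes>\<^sub>M p3" ..

lemma sp1[simp]: "space p1 = UNIV" using pon_space[OF h1] .
lemma sp2[simp]: "space p2 = UNIV" using pon_space[OF h2] .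
lemma sp3[simp]: "space p3 = UNIV" using pon_space[OF h3] .
lemma spP[simp]: "space P = UNIV" by (simp add: space_pair_measure)

lemma sets1[measurable_cong]: "sets p1 = sets borel" using pon_sets[OF h1] .
lemma sets2[measurable_cong]: "sets p2 = sets borel" using pon_sets[OF h2] .
lemma sets3[measurable_cong]: "sets p3 = sets borel" using pon_sets[OF h3] .

lemma setsP: "sets P = sets (borel :: (real \<times> real \<times> real) measure)"
proof -
  have "sets P = sets (borel \<Otimes>\<^sub>M (borel \<Otimes>\<^sub>M borel) :: (real \<times> real \<times> real) measure)"
    by (intro sets_pair_measure_cong sets1 sets2 sets3)
  also have "\<dots> = sets (borel \<Otimes>\<^sub>M (borel :: (real \<times> real) measure))"
    by (simp only: borel_prod)
  also have "\<dots> = sets (borel :: (real \<times> real \<times> real) measure)"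
    by (simp only: borel_prod)
  finally show ?thesis .
qed

lemma Rmap_meas: "Rmap \<in> measurable P P"
  using Rmap_borel by (simp add: measurable_cong_sets[OF setsP setsP])

lemma inv_R: "E \<in> sets P \<Longrightarrow> emeasure P (Rmap -` E) = emeasure P E"
proof -
  assume E: "E \<in> sets P"
  have "emeasure P E = emeasure (distr P P Rmap) E" using hR by simp
  also have "\<dots> = emeasure P (Rmap -` E \<inter> space P)" by (rule emeasure_distr[OF Rmap_meas E])
  finally show ?thesis by simp
qed

lemma box: "A \<in> sets borel \<Longrightarrow> B \<in> sets borel \<Longrightarrow> C \<in> sets borel \<Longrightarrow>
   emeasure P (A \<times> (B \<times> C)) = emeasure p1 A * emeasure p2 B * emeasure p3 C"
proof -
  assume a: "A \<in> sets borel" "B \<in> sets borel" "C \<in> sets borel"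
  have "emeasure P (A \<times> (B \<times> C)) = emeasure p1 A * emeasure (p2 \<Otimes>\<^sub>M p3) (B \<times> C)"
    using a by (intro sigma_finite_measure.emeasure_pair_measure_Times q23.P.sigma_finite_measure_axioms) (auto simp: sets1 sets2 sets3)
  also have "emeasure (p2 \<Otimes>\<^sub>M p3) (B \<times> C) = emeasure p2 B * emeasure p3 C"
    using a by (intro q3.emeasure_pair_measure_Times) (auto simp: sets2 sets3)
  finally show ?thesis by (simp add: mult.assoc)
qed

abbreviation "S1 \<equiv> msupp p1"
abbreviation "S2 \<equiv> msupp p2"
abbreviation "S3 \<equiv> msupp p3"

lemma open_pos:
  assumes p: "p \<in> S1 \<times> (S2 \<times> S3)" and Ob: "open Ob" "p \<in> Ob"
  shows "emeasure P Ob > 0"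
proof -
  obtain W1 W' where W: "open W1" "open W'" "p \<in> W1 \<times> W'" "W1 \<times> W' \<subseteq> Ob"
    using open_prod_elim[OF Ob] by blast
  obtain W2 W3 where W2: "open W2" "open W3" "snd p \<in> W2 \<times> W3" "W2 \<times> W3 \<subseteq> W'"
  proof -
    have "snd p \<in> W'" using W(3) by (cases p) auto
    from open_prod_elim[OF W(2) this] show ?thesis using that by blast
  qed
  have "W1 \<times> (W2 \<times> W3) \<subseteq> Ob" using W W2 by auto
  then have "emeasure P (W1 \<times> (W2 \<times> W3)) \<le> emeasure P Ob"
    using Ob(1) by (intro emeasure_mono) (auto simp: setsP)
  moreover have "emeasure P (W1 \<times> (W2 \<times> W3)) > 0"
  proof -
    have a: "emeasure p1 W1 > 0" using msupp_pos[OF h1, of "fst p" W1] p W by (cases p) auto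
    have b: "emeasure p2 W2 > 0" using msupp_pos[OF h2, of "fst (snd p)" W2] p W2 by (cases p) auto
    have c: "emeasure p3 W3 > 0" using msupp_pos[OF h3, of "snd (snd p)" W3] p W2 by (cases p) auto
    show ?thesis using a b c W W2 by (simp add: box ennreal_zero_less_mult_iff)
  qed
  ultimately show ?thesis by auto
qed

lemma null_not_image:
  assumes p: "p \<in> S1 \<times> (S2 \<times> S3)" and E: "open E" "emeasure P E = 0"
  shows "Rmap p \<notin> E"
proof
  assume "Rmap p \<in> E"
  moreover have "open (Rmap -` E)" using E(1) Rmap_cont by (rule continuous_open_vimage)
  ultimately have "emeasure P (Rmap -` E) > 0" using open_pos[OF p] by auto
  moreover have "E \<in> sets P" using E(1) by (simp add: setsP)
  ultimately show False using inv_R E(2) by simp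
qed

lemma supp_R:
  assumes "r \<in> S1" "s \<in> S2" "t \<in> S3"
  shows "t + max (r - s) 0 \<in> S1" "t + max (s - r) 0 \<in> S2" "min r s \<in> S3"
proof -
  have p: "(r, s, t) \<in> S1 \<times> (S2 \<times> S3)" using assms by auto
  show "t + max (r - s) 0 \<in> S1"
  proof (rule ccontr)
    assume "t + max (r - s) 0 \<notin> S1"
    then obtain V where V: "open V" "t + max (r - s) 0 \<in> V" "emeasure p1 V = 0"
      using not_msupp_iff[OF h1] by blast
    have "emeasure P (V \<times> (UNIV \<times> UNIV)) = 0" using V box[of V UNIV UNIV] by simp
    then have "Rmap (r,s,t) \<notin> V \<times> (UNIV \<times> UNIV)"
      using V(1) by (intro null_not_image[OF p]) (auto intro: open_Times)
    then show False using V by simp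
  qed
  show "t + max (s - r) 0 \<in> S2"
  proof (rule ccontr)
    assume "t + max (s - r) 0 \<notin> S2"
    then obtain V where V: "open V" "t + max (s - r) 0 \<in> V" "emeasure p2 V = 0"
      using not_msupp_iff[OF h2] by blast
    have "emeasure P (UNIV \<times> (V \<times> UNIV)) = 0" using V box[of UNIV V UNIV] by simp
    then have "Rmap (r,s,t) \<notin> UNIV \<times> (V \<times> UNIV)"
      using V(1) by (intro null_not_image[OF p]) (auto intro: open_Times)
    then show False using V by simp
  qed
  show "min r s \<in> S3"
  proof (rule ccontr)
    assume "min r s \<notin> S3"
    then obtain V where V: "open V" "min r s \<in> V" "emeasure p3 V = 0"
      using not_msupp_iff[OF h3] by blast
    have "emeasure P (UNIV \<times> (UNIV \<times> V)) = 0" using V box[of UNIV UNIV V] by simp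
    then have "Rmap (r,s,t) \<notin> UNIV \<times> (UNIV \<times> V)"
      using V(1) by (intro null_not_image[OF p]) (auto intro: open_Times)
    then show False using V by simp
  qed
qed

end

lemma T_mult:
  assumes add: "\<And>u v. u \<in> T \<Longrightarrow> v \<in> T \<Longrightarrow> u + v \<in> (T::real set)" and z: "0 \<in> T" and u: "u \<in> T"
  shows "real n * u \<in> T"
proof (induction n)
  case 0 then show ?case using z by simp
next
  case (Suc n) then show ?case using add[OF Suc u] by (simp add: algebra_simps)
qed

lemma T_struct:
  fixes T :: "real set"
  assumes cl: "closed T" and z: "0 \<in> T" and nn: "T \<subseteq> {0..}"
    and add: "\<And>u v. u \<in> T \<Longrightarrow> v \<in> T \<Longrightarrow> u + v \<in> T"
    and dif: "\<And>u v. u \<in> T \<Longrightarrow> v \<in> T \<Longrightarrow> v \<le> u \<Longrightarrow> u - v \<in> T"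
    and pos: "\<exists>u\<in>T. u > 0"
  shows "T = {0..} \<or> (\<exists>c>0. T = range (\<lambda>n::nat. c * real n))"
proof -
  define A where "A = T \<inter> {0<..}"
  have Ane: "A \<noteq> {}" using pos by (auto simp: A_def)
  have Abd: "bdd_below A" by (auto simp: A_def bdd_below_def intro!: exI[of _ 0])
  define c where "c = Inf A"
  have c0: "c \<ge> 0" unfolding c_def using Ane by (intro cInf_greatest) (auto simp: A_def)
  show ?thesis
  proof (cases "c > 0")
    case True
    have "c \<in> closure A" unfolding c_def using Ane Abd by (rule closure_contains_Inf)
    moreover have "closure A \<subseteq> T" using cl by (metis A_def closure_minimal inf_le1)
    ultimately have cT: "c \<in> T" by auto
    have "T = range (\<lambda>n::nat. c * real n)"
    proof
      show "range (\<lambda>n::nat. c * real n) \<subseteq> T"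
        using T_mult[OF add z cT] by (auto simp: mult.commute)
      show "T \<subseteq> range (\<lambda>n::nat. c * real n)"
      proof
        fix x assume x: "x \<in> T"
        then have x0: "x \<ge> 0" using nn by auto
        define n where "n = nat \<lfloor>x / c\<rfloor>"
        have n1: "real n * c \<le> x"
        proof -
          have "real n = of_int \<lfloor>x / c\<rfloor>" using x0 True by (simp add: n_def)
          also have "\<dots> \<le> x / c" by simp
          finally show ?thesis using True by (simp add: field_simps)
        qed
        have n2: "x < real n * c + c"
        proof -
          have "x / c < of_int \<lfloor>x / c\<rfloor> + 1" by linarith
          also have "of_int \<lfloor>x / c\<rfloor> = real n" using x0 True by (simp add: n_def)
          finally show ?thesis using True by (simp add: field_simps)
        qed
        have nT: "real n * c \<in> T" using T_mult[OF add z cT] .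
        have d: "x - real n * c \<in> T" using dif[OF x nT n1] .
        have "x - real n * c = 0"
        proof (rule ccontr)
          assume "x - real n * c \<noteq> 0"
          then have "x - real n * c \<in> A" using d n1 by (auto simp: A_def)
          then have "c \<le> x - real n * c" unfolding c_def using Abd by (rule cInf_lower)
          then show False using n2 by simp
        qed
        then show "x \<in> range (\<lambda>n::nat. c * real n)" by (auto intro!: image_eqI[of _ _ n] simp: mult.commute)
      qed
    qed
    then show ?thesis using True by auto
  next
    case False
    then have c00: "c = 0" using c0 by simp
    have "T = {0..}"
    proof
      show "T \<subseteq> {0..}" using nn .
      show "{0..} \<subseteq> T"
      proof
        fix x :: real assume x: "x \<in> {0..}"
        have "\<forall>\<epsilon>>0. \<exists>y\<in>T. dist y x < \<epsilon>"
        proof (intro allI impI)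
          fix \<epsilon> :: real assume e: "\<epsilon> > 0"
          have "Inf A < \<epsilon>" using c00 e by (simp add: c_def)
          then obtain e' where e': "e' \<in> A" "e' < \<epsilon>" using cInf_less_iff[OF Ane Abd] by auto
          then have e'0: "e' > 0" "e' \<in> T" by (auto simp: A_def)
          define n where "n = nat \<lfloor>x / e'\<rfloor>"
          have n1: "real n * e' \<le> x"
          proof -
            have "real n = of_int \<lfloor>x / e'\<rfloor>" using x e'0 by (simp add: n_def)
            also have "\<dots> \<le> x / e'" by simp
            finally show ?thesis using e'0 by (simp add: field_simps)
          qed
          have n2: "x < real n * e' + e'"
          proof -
            have "x / e' < of_int \<lfloor>x / e'\<rfloor> + 1" by linarith
            also have "of_int \<lfloor>x / e'\<rfloor> = real n" using x e'0 by (simp add: n_def)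
            finally show ?thesis using e'0 by (simp add: field_simps)
          qed
          have "real n * e' \<in> T" using T_mult[OF add z e'0(2)] .
          moreover have "dist (real n * e') x < \<epsilon>" using n1 n2 e' by (simp add: dist_real_def)
          ultimately show "\<exists>y\<in>T. dist y x < \<epsilon>" by blast
        qed
        then show "x \<in> T" using closed_approachable[OF cl] by blast
      qed
    qed
    then show ?thesis by simp
  qed
qed

context bl begin

definition "t0 = Inf S3"

lemma S_bdd: "bdd_below (msupp M)" if "prob_on_nonneg M"
  using msupp_nonneg[OF that] by (auto simp: bdd_below_def intro!: exI[of _ 0])

lemma Inf_in: "prob_on_nonneg M \<Longrightarrow> Inf (msupp M) \<in> msupp M"
  using closed_contains_Inf[OF msupp_nonempty S_bdd closed_msupp] by blast

lemma Inf_le: "prob_on_nonneg M \<Longrightarrow> x \<in> msupp M \<Longrightarrow> Inf (msupp M) \<le> x"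
  using cInf_lower[OF _ S_bdd] by blast

lemma t0_in: "t0 \<in> S3" unfolding t0_def using Inf_in[OF h3] .
lemma t0_le: "x \<in> S3 \<Longrightarrow> t0 \<le> x" unfolding t0_def using Inf_le[OF h3] .

lemma S3_min: "c \<in> S3 \<Longrightarrow> \<exists>r\<in>S1. \<exists>s\<in>S2. c = min r s"
proof -
  assume c: "c \<in> S3"
  obtain a1 where a1: "a1 \<in> S1" using msupp_nonempty[OF h1] by auto
  obtain a2 where a2: "a2 \<in> S2" using msupp_nonempty[OF h2] by auto
  show ?thesis using supp_R(1,2)[OF a1 a2 c]
    by (intro bexI[of _ "c + max (a1 - a2) 0"] bexI[of _ "c + max (a2 - a1) 0"]) auto
qed

lemma supp_struct:
  assumes ne: "S3 \<noteq> {t0}"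
  shows "S1 = S3" "S2 = S3"
    "(\<lambda>x. x - t0) ` S3 = {0..} \<or> (\<exists>c>0. (\<lambda>x. x - t0) ` S3 = range (\<lambda>n::nat. c * real n))"
proof -
  define a1 where "a1 = Inf S1"
  define a2 where "a2 = Inf S2"
  have a1: "a1 \<in> S1" "\<And>x. x \<in> S1 \<Longrightarrow> a1 \<le> x" unfolding a1_def using Inf_in[OF h1] Inf_le[OF h1] by auto
  have a2: "a2 \<in> S2" "\<And>x. x \<in> S2 \<Longrightarrow> a2 \<le> x" unfolding a2_def using Inf_in[OF h2] Inf_le[OF h2] by auto
  obtain t1 where t1: "t1 \<in> S3" "t1 \<noteq> t0" using ne t0_in by blast
  then have t1': "t1 > t0" using t0_le[OF t1(1)] by simp
  have m: "min a1 a2 = t0"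
  proof (rule antisym)
    obtain r s where rs: "r \<in> S1" "s \<in> S2" "t0 = min r s" using S3_min[OF t0_in] by auto
    have "a1 \<le> r" "a2 \<le> s" using rs a1(2) a2(2) by auto
    then show "min a1 a2 \<le> t0" using rs(3) by linarith
    show "t0 \<le> min a1 a2" using t0_le[OF supp_R(3)[OF a1(1) a2(1) t0_in]] .
  qed
  have a1t: "a1 = t0"
  proof (rule ccontr)
    assume "a1 \<noteq> t0"
    then have lt: "a1 > t0" "a2 = t0" using m by (auto simp: min_def split: if_splits)
    have "\<And>s. s \<in> S2 \<Longrightarrow> s = t0"
    proof -
      fix s assume s: "s \<in> S2"
      have "t0 + max (a1 - s) 0 \<in> S1" using supp_R(1)[OF a1(1) s t0_in] .
      then have "a1 \<le> t0 + max (a1 - s) 0" using a1(2) by blast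
      then have "s \<le> t0" using lt by (auto simp: max_def split: if_splits)
      then show "s = t0" using a2(2)[OF s] lt by simp
    qed
    moreover have "S3 \<subseteq> {t0}"
    proof
      fix c assume "c \<in> S3"
      then obtain r s where rs: "r \<in> S1" "s \<in> S2" "c = min r s" using S3_min by blast
      then show "c \<in> {t0}" using calculation[OF rs(2)] a1(2)[OF rs(1)] lt by auto
    qed
    ultimately show False using ne t0_in by auto
  qed
  have a2t: "a2 = t0"
  proof (rule ccontr)
    assume "a2 \<noteq> t0"
    then have lt: "a2 > t0" "a1 = t0" using m by (auto simp: min_def split: if_splits)
    have "\<And>r. r \<in> S1 \<Longrightarrow> r = t0"
    proof -
      fix r assume r: "r \<in> S1"
      have "t0 + max (a2 - r) 0 \<in> S2" using supp_R(2)[OF r a2(1) t0_in] .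
      then have "a2 \<le> t0 + max (a2 - r) 0" using a2(2) by blast
      then have "r \<le> t0" using lt by (auto simp: max_def split: if_splits)
      then show "r = t0" using a1(2)[OF r] lt by simp
    qed
    moreover have "S3 \<subseteq> {t0}"
    proof
      fix c assume "c \<in> S3"
      then obtain r s where rs: "r \<in> S1" "s \<in> S2" "c = min r s" using S3_min by blast
      then show "c \<in> {t0}" using calculation[OF rs(1)] a2(2)[OF rs(2)] lt by auto
    qed
    ultimately show False using ne t0_in by auto
  qed
  have t01: "t0 \<in> S1" and t02: "t0 \<in> S2" using a1 a2 a1t a2t by auto
  have ge1: "\<And>r. r \<in> S1 \<Longrightarrow> t0 \<le> r" using a1 a1t by auto
  have ge2: "\<And>r. r \<in> S2 \<Longrightarrow> t0 \<le> r" using a2 a2t by auto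
  define \<delta> where "\<delta> = t1 - t0"
  have dpos: "\<delta> > 0" using t1' by (simp add: \<delta>_def)
  have step2: "s + \<delta> \<in> S2" if "s \<in> S2" for s
  proof -
    have "max (s - t0) 0 = s - t0" using ge2[OF that] by simp
    then show ?thesis using supp_R(2)[OF t01 that t1(1)] by (simp add: \<delta>_def algebra_simps)
  qed
  have step1: "r + \<delta> \<in> S1" if "r \<in> S1" for r
  proof -
    have "max (r - t0) 0 = r - t0" using ge1[OF that] by simp
    then show ?thesis using supp_R(1)[OF that t02 t1(1)] by (simp add: \<delta>_def algebra_simps)
  qed
  have it2: "t0 + real n * \<delta> \<in> S2" for n
  proof (induction n)
    case 0 then show ?case using t02 by simp
  next
    case (Suc n) then show ?case using step2[OF Suc] by (simp add: algebra_simps)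
  qed
  have it1: "t0 + real n * \<delta> \<in> S1" for n
  proof (induction n)
    case 0 then show ?case using t01 by simp
  next
    case (Suc n) then show ?case using step1[OF Suc] by (simp add: algebra_simps)
  qed
  have unb2: "\<exists>s\<in>S2. x \<le> s" for x
  proof -
    obtain n where "x - t0 < real n * \<delta>" using ex_less_of_nat_mult[OF dpos] by blast
    then show ?thesis using it2[of n] by (intro bexI[of _ "t0 + real n * \<delta>"]) auto
  qed
  have unb1: "\<exists>s\<in>S1. x \<le> s" for x
  proof -
    obtain n where "x - t0 < real n * \<delta>" using ex_less_of_nat_mult[OF dpos] by blast
    then show ?thesis using it1[of n] by (intro bexI[of _ "t0 + real n * \<delta>"]) auto
  qed
  have 31: "S3 \<subseteq> S1" using supp_R(1)[OF t01 t02] by auto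
  have 32: "S3 \<subseteq> S2" using supp_R(2)[OF t01 t02] by auto
  have 13: "S1 \<subseteq> S3"
  proof
    fix r assume r: "r \<in> S1"
    obtain s where "s \<in> S2" "r \<le> s" using unb2 by blast
    then show "r \<in> S3" using supp_R(3)[OF r \<open>s \<in> S2\<close> t0_in] by (simp add: min_def)
  qed
  have 23: "S2 \<subseteq> S3"
  proof
    fix s assume s: "s \<in> S2"
    obtain r where "r \<in> S1" "s \<le> r" using unb1 by blast
    then show "s \<in> S3" using supp_R(3)[OF \<open>r \<in> S1\<close> s t0_in] by (cases "r = s") (auto simp: min_def)
  qed
  show e1: "S1 = S3" using 31 13 by auto
  show e2: "S2 = S3" using 32 23 by auto
  define T where "T = (\<lambda>x. x - t0) ` S3"
  have memT: "u \<in> T \<longleftrightarrow> t0 + u \<in> S3" for u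
    unfolding T_def by (auto intro: image_eqI[of _ _ "t0 + u"])
  have "T = {0..} \<or> (\<exists>c>0. T = range (\<lambda>n::nat. c * real n))"
  proof (rule T_struct)
    have "T = (+) (- t0) ` S3" unfolding T_def by (auto simp: image_def)
    moreover have "closed ((+) (- t0) ` S3)" by (rule closed_translation[OF closed_msupp])
    ultimately show "closed T" by simp
    show "0 \<in> T" using memT t0_in by simp
    show "T \<subseteq> {0..}" using t0_le by (auto simp: T_def)
    show "u + v \<in> T" if "u \<in> T" "v \<in> T" for u v
    proof -
      have "t0 + u + max (t0 + v - t0) 0 \<in> S1"
        using supp_R(1)[of "t0 + v" t0 "t0 + u"] that e1 t02 memT by auto
      moreover have "v \<ge> 0" using that t0_le memT by force
      ultimately show ?thesis using memT e1 by (simp add: add.assoc)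
    qed
    show "u - v \<in> T" if "u \<in> T" "v \<in> T" "v \<le> u" for u v
    proof -
      have "t0 + max (t0 + u - (t0 + v)) 0 \<in> S1"
        using supp_R(1)[of "t0 + u" "t0 + v" t0] that e1 e2 t0_in memT by auto
      then show ?thesis using memT e1 that(3) by simp
    qed
    show "\<exists>u\<in>T. u > 0" using t1 t1' memT by (intro bexI[of _ "t1 - t0"]) auto
  qed
  then show "(\<lambda>x. x - t0) ` S3 = {0..} \<or> (\<exists>c>0. (\<lambda>x. x - t0) ` S3 = range (\<lambda>n::nat. c * real n))"
    by (simp add: T_def)
qed

end

lemma tail_meas:
  assumes "prob_on_nonneg M"
  shows "(\<lambda>s. emeasure M {s + d..}) \<in> borel_measurable borel"
    "(\<lambda>s. emeasure M {s + d<..}) \<in> borel_measurable borel"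
proof -
  interpret prob_space M using pon_prob[OF assms] .
  have ss: "sets (borel \<Otimes>\<^sub>M M) = sets (borel :: (real \<times> real) measure)"
  proof -
    have "sets (borel \<Otimes>\<^sub>M M) = sets (borel \<Otimes>\<^sub>M (borel :: real measure))"
      using pon_sets[OF assms] by (intro sets_pair_measure_cong) auto
    also have "\<dots> = sets (borel :: (real \<times> real) measure)" by (simp only: borel_prod)
    finally show ?thesis .
  qed
  have Q: "{p::real\<times>real. fst p + d \<le> snd p} \<in> sets (borel \<Otimes>\<^sub>M M)"
    unfolding ss by (intro borel_closed closed_Collect_le continuous_intros)
  have "(\<lambda>x. emeasure M (Pair x -` {p::real\<times>real. fst p + d \<le> snd p})) \<in> borel_measurable borel"
    by (rule measurable_emeasure_Pair[OF Q])
  moreover have "\<And>x. Pair x -` {p::real\<times>real. fst p + d \<le> snd p} = {x + d..}" by auto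
  ultimately show "(\<lambda>s. emeasure M {s + d..}) \<in> borel_measurable borel" by simp
  have Q': "{p::real\<times>real. fst p + d < snd p} \<in> sets (borel \<Otimes>\<^sub>M M)"
    unfolding ss by (intro borel_open open_Collect_less continuous_intros)
  have "(\<lambda>x. emeasure M (Pair x -` {p::real\<times>real. fst p + d < snd p})) \<in> borel_measurable borel"
    by (rule measurable_emeasure_Pair[OF Q'])
  moreover have "\<And>x. Pair x -` {p::real\<times>real. fst p + d < snd p} = {x + d<..}" by auto
  ultimately show "(\<lambda>s. emeasure M {s + d<..}) \<in> borel_measurable borel" by simp
qed

lemma ae_density:
  assumes sf: "sigma_finite_measure M"
    and f: "f \<in> borel_measurable M" and g: "g \<in> borel_measurable M"
    and F: "\<And>C. C \<in> sets M \<Longrightarrow> (\<integral>\<^sup>+x. f x * indicator C x \<partial>M) = \<nu> C * a"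
    and G: "\<And>C. C \<in> sets M \<Longrightarrow> (\<integral>\<^sup>+x. g x * indicator C x \<partial>M) = \<nu> C * b"
  shows "AE x in M. f x * b = g x * a"
proof (rule sigma_finite_measure.density_unique2[OF sf])
  show "(\<lambda>x. f x * b) \<in> borel_measurable M" "(\<lambda>x. g x * a) \<in> borel_measurable M" using f g by auto
  fix C assume C: "C \<in> sets M"
  have "(\<integral>\<^sup>+x\<in>C. f x * b \<partial>M) = (\<integral>\<^sup>+x. (f x * indicator C x) * b \<partial>M)"
    by (rule nn_integral_cong) (simp add: ac_simps)
  also have "\<dots> = \<nu> C * a * b" using F[OF C] f C by (subst nn_integral_multc) auto
  also have "\<dots> = \<nu> C * b * a" by (simp add: ac_simps)
  also have "\<dots> = (\<integral>\<^sup>+x. (g x * indicator C x) * a \<partial>M)" using G[OF C] g C by (subst nn_integral_multc) auto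
  also have "\<dots> = (\<integral>\<^sup>+x\<in>C. g x * a \<partial>M)" by (rule nn_integral_cong) (simp add: ac_simps)
  finally show "(\<integral>\<^sup>+x\<in>C. f x * b \<partial>M) = (\<integral>\<^sup>+x\<in>C. g x * a \<partial>M)" .
qed

context bl begin

lemma boxS: "A \<in> sets borel \<Longrightarrow> B \<in> sets borel \<Longrightarrow> C \<in> sets borel \<Longrightarrow> A \<times> (B \<times> C) \<in> sets P"
  by (auto simp: sets1 sets2 sets3)

lemma D0: "emeasure p3 {z..} = emeasure p1 {z..} * emeasure p2 {z..}"
proof -
  have "Rmap -` (UNIV \<times> (UNIV \<times> {z..})) = {z..} \<times> ({z..} \<times> UNIV)" by auto
  then have "emeasure P (UNIV \<times> (UNIV \<times> {z..})) = emeasure P ({z..} \<times> ({z..} \<times> UNIV))"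
    using inv_R[OF boxS[of UNIV UNIV "{z..}"]] by simp
  then show ?thesis using box by (simp add: q1.emeasure_space_1[simplified] q2.emeasure_space_1[simplified]
     q3.emeasure_space_1[simplified])
qed

lemma D0s: "emeasure p3 {z<..} = emeasure p1 {z<..} * emeasure p2 {z<..}"
proof -
  have "Rmap -` (UNIV \<times> (UNIV \<times> {z<..})) = {z<..} \<times> ({z<..} \<times> UNIV)" by auto
  then have "emeasure P (UNIV \<times> (UNIV \<times> {z<..})) = emeasure P ({z<..} \<times> ({z<..} \<times> UNIV))"
    using inv_R[OF boxS[of UNIV UNIV "{z<..}"]] by simp
  then show ?thesis using box by (simp add: q1.emeasure_space_1[simplified] q2.emeasure_space_1[simplified]
     q3.emeasure_space_1[simplified])
qed

lemma D2:
  assumes d: "d \<ge> 0" and C: "C \<in> sets borel"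
  shows "(\<integral>\<^sup>+r. emeasure p2 {r + d..} * indicator C r \<partial>p1) = emeasure p3 C * (\<integral>\<^sup>+r. emeasure p2 {r + d..} \<partial>p1)"
proof -
  define E where "E = {x::real\<times>real\<times>real. fst x + d \<le> fst (snd x) \<and> snd (snd x) \<in> C}"
  have C3[measurable]: "C \<in> sets p3" "C \<in> sets p1" using C sets3 sets1 by auto
  have "E = {x \<in> space P. fst x + d \<le> fst (snd x) \<and> snd (snd x) \<in> C}" by (simp add: E_def)
  also have "\<dots> \<in> sets P" by measurable
  finally have Em: "E \<in> sets P" .
  have RE: "Rmap -` E = {x. fst x + d \<le> fst (snd x) \<and> fst x \<in> C}"
    using d by (auto simp: E_def Rmap_alt min_def max_def)
  have "Rmap -` E = {x \<in> space P. fst x + d \<le> fst (snd x) \<and> fst x \<in> C}" by (simp add: RE)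
  also have "\<dots> \<in> sets P" by measurable
  finally have REm: "Rmap -` E \<in> sets P" .
  have "emeasure P (Rmap -` E) = (\<integral>\<^sup>+r. emeasure (p2 \<Otimes>\<^sub>M p3) (Pair r -` (Rmap -` E)) \<partial>p1)"
    by (rule q23.P.emeasure_pair_measure_alt[OF REm])
  also have "\<dots> = (\<integral>\<^sup>+r. emeasure p2 {r + d..} * indicator C r \<partial>p1)"
  proof (rule nn_integral_cong)
    fix r
    have "Pair r -` (Rmap -` E) = (if r \<in> C then {r + d..} \<times> UNIV else {})" unfolding RE by auto
    then show "emeasure (p2 \<Otimes>\<^sub>M p3) (Pair r -` (Rmap -` E)) = emeasure p2 {r + d..} * indicator C r"
      by (simp add: q3.emeasure_pair_measure_Times q3.emeasure_space_1[simplified])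
  qed
  finally have 1: "emeasure P (Rmap -` E) = (\<integral>\<^sup>+r. emeasure p2 {r + d..} * indicator C r \<partial>p1)" .
  have "emeasure P E = (\<integral>\<^sup>+r. emeasure (p2 \<Otimes>\<^sub>M p3) (Pair r -` E) \<partial>p1)"
    by (rule q23.P.emeasure_pair_measure_alt[OF Em])
  also have "\<dots> = (\<integral>\<^sup>+r. emeasure p2 {r + d..} * emeasure p3 C \<partial>p1)"
  proof (rule nn_integral_cong)
    fix r
    have "Pair r -` E = {r + d..} \<times> C" unfolding E_def by auto
    then show "emeasure (p2 \<Otimes>\<^sub>M p3) (Pair r -` E) = emeasure p2 {r + d..} * emeasure p3 C"
      using C by (simp add: q3.emeasure_pair_measure_Times sets3)
  qed
  also have "\<dots> = (\<integral>\<^sup>+r. emeasure p2 {r + d..} \<partial>p1) * emeasure p3 C"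
    using tail_meas(1)[OF h2, of d] by (intro nn_integral_multc) (simp add: measurable_cong_sets[OF sets1 refl])
  finally show ?thesis using 1 inv_R[OF Em] by (simp add: mult.commute)
qed

lemma tm1: "(\<lambda>s. emeasure p1 {s + d..}) \<in> borel_measurable p2"
  using tail_meas(1)[OF h1, of d] by (simp add: measurable_cong_sets[OF sets2 refl])

lemma D1:
  assumes d: "d \<ge> 0" and C: "C \<in> sets borel"
  shows "(\<integral>\<^sup>+s. emeasure p1 {s + d..} * indicator C s \<partial>p2) = emeasure p3 C * (\<integral>\<^sup>+s. emeasure p1 {s + d..} \<partial>p2)"
proof -
  define E where "E = {x::real\<times>real\<times>real. fst (snd x) + d \<le> fst x \<and> snd (snd x) \<in> C}"
  have C3[measurable]: "C \<in> sets p3" "C \<in> sets p2" using C sets3 sets2 by auto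
  have "E = {x \<in> space P. fst (snd x) + d \<le> fst x \<and> snd (snd x) \<in> C}" by (simp add: E_def)
  also have "\<dots> \<in> sets P" by measurable
  finally have Em: "E \<in> sets P" .
  have RE: "Rmap -` E = {x. fst (snd x) + d \<le> fst x \<and> fst (snd x) \<in> C}"
    using d by (auto simp: E_def Rmap_alt min_def max_def)
  have "Rmap -` E = {x \<in> space P. fst (snd x) + d \<le> fst x \<and> fst (snd x) \<in> C}" by (simp add: RE)
  also have "\<dots> \<in> sets P" by measurable
  finally have REm: "Rmap -` E \<in> sets P" .
  have tmf: "(\<lambda>y. emeasure p1 {fst y + d..}) \<in> borel_measurable (p2 \<Otimes>\<^sub>M p3)"
    using measurable_compose[OF measurable_fst[of p2 p3] tm1[of d]] by simp
  have "emeasure P (Rmap -` E) = (\<integral>\<^sup>+y. emeasure p1 ((\<lambda>x. (x, y)) -` (Rmap -` E)) \<partial>(p2 \<Otimes>\<^sub>M p3))"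
    by (rule q123.emeasure_pair_measure_alt2[OF REm])
  also have "\<dots> = (\<integral>\<^sup>+y. emeasure p1 {fst y + d..} * indicator C (fst y) \<partial>(p2 \<Otimes>\<^sub>M p3))"
  proof (rule nn_integral_cong)
    fix y :: "real \<times> real"
    have "(\<lambda>x. (x, y)) -` (Rmap -` E) = (if fst y \<in> C then {fst y + d..} else {})" unfolding RE by auto
    then show "emeasure p1 ((\<lambda>x. (x, y)) -` (Rmap -` E)) = emeasure p1 {fst y + d..} * indicator C (fst y)"
      by simp
  qed
  also have "\<dots> = (\<integral>\<^sup>+s. \<integral>\<^sup>+t. emeasure p1 {fst (s, t) + d..} * indicator C (fst (s, t)) \<partial>p3 \<partial>p2)"
    by (rule q3.nn_integral_fst[symmetric]) (use tmf in measurable)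
  also have "\<dots> = (\<integral>\<^sup>+s. emeasure p1 {s + d..} * indicator C s \<partial>p2)"
    by (simp add: q3.emeasure_space_1[simplified])
  finally have 1: "emeasure P (Rmap -` E) = (\<integral>\<^sup>+s. emeasure p1 {s + d..} * indicator C s \<partial>p2)" .
  have "emeasure P E = (\<integral>\<^sup>+y. emeasure p1 ((\<lambda>x. (x, y)) -` E) \<partial>(p2 \<Otimes>\<^sub>M p3))"
    by (rule q123.emeasure_pair_measure_alt2[OF Em])
  also have "\<dots> = (\<integral>\<^sup>+y. emeasure p1 {fst y + d..} * indicator C (snd y) \<partial>(p2 \<Otimes>\<^sub>M p3))"
  proof (rule nn_integral_cong)
    fix y :: "real \<times> real"
    have "(\<lambda>x. (x, y)) -` E = (if snd y \<in> C then {fst y + d..} else {})" unfolding E_def by auto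
    then show "emeasure p1 ((\<lambda>x. (x, y)) -` E) = emeasure p1 {fst y + d..} * indicator C (snd y)"
      by simp
  qed
  also have "\<dots> = (\<integral>\<^sup>+s. \<integral>\<^sup>+t. emeasure p1 {fst (s, t) + d..} * indicator C (snd (s, t)) \<partial>p3 \<partial>p2)"
    by (rule q3.nn_integral_fst[symmetric]) (use tmf in measurable)
  also have "\<dots> = (\<integral>\<^sup>+s. emeasure p1 {s + d..} * emeasure p3 C \<partial>p2)"
    using C3 by (simp add: nn_integral_cmult_indicator)
  also have "\<dots> = (\<integral>\<^sup>+s. emeasure p1 {s + d..} \<partial>p2) * emeasure p3 C"
    using tm1 by (intro nn_integral_multc) simp
  finally show ?thesis using 1 inv_R[OF Em] by (simp add: mult.commute)
qed

end

lemma fin_measure_split: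
  assumes "prob_on_nonneg M"
  shows "measure M {x..} = measure M {x} + measure M {x<..}"
proof -
  interpret prob_space M using pon_prob[OF assms] .
  have "measure M ({x} \<union> {x<..}) = measure M {x} + measure M {x<..}"
    by (rule finite_measure_Union) (auto intro: pon_borel[OF assms])
  moreover have "{x} \<union> {x<..} = {x..}" by auto
  ultimately show ?thesis by simp
qed

lemma fin_measure_compl:
  assumes "prob_on_nonneg M"
  shows "measure M {x..} = 1 - measure M {..<x}"
proof -
  interpret prob_space M using pon_prob[OF assms] .
  have "{x..} = space M - {..<x}" using pon_space[OF assms] by auto
  then show ?thesis using pon_borel[OF assms] by (simp add: prob_compl)
qed

lemma tail_LC:
  assumes "prob_on_nonneg M" "\<epsilon> > 0"
  shows "\<exists>\<delta>>0. \<forall>y. x - \<delta> < y \<longrightarrow> measure M {y..} \<le> measure M {x..} + \<epsilon>"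
proof -
  interpret prob_space M using pon_prob[OF assms(1)] .
  define A where "A n = {x - 1 / (real n + 1)..}" for n :: nat
  have dec: "decseq A" unfolding A_def decseq_def
    by (auto simp: frac_le)
  have rng: "range A \<subseteq> sets M" using pon_borel[OF assms(1)] by (auto simp: A_def)
  have int: "(\<Inter>n. A n) = {x..}"
  proof (auto simp: A_def)
    fix y assume "\<forall>n. x - 1 / (real n + 1) \<le> y"
    show "x \<le> y"
    proof (rule ccontr)
      assume "\<not> x \<le> y"
      then obtain n where "inverse (real (Suc n)) < x - y"
        using reals_Archimedean[of "x - y"] by auto
      then have "1 / (real n + 1) < x - y" by (simp add: inverse_eq_divide add.commute)
      moreover have "x - 1 / (real n + 1) \<le> y" using \<open>\<forall>n. x - 1 / (real n + 1) \<le> y\<close> by blast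
      ultimately show False by linarith
    qed
  next
    fix y n assume "x \<le> y" then show "x - 1 / (real n + 1) \<le> y"
    proof -
      have "0 \<le> 1 / (real n + 1)" by simp
      then show ?thesis using \<open>x \<le> y\<close> by linarith
    qed
  qed
  have "(\<lambda>n. measure M (A n)) \<longlonglongrightarrow> measure M {x..}"
    using finite_Lim_measure_decseq[OF rng dec] int by simp
  then have "eventually (\<lambda>n. measure M (A n) < measure M {x..} + \<epsilon>) sequentially"
    using assms(2) by (intro order_tendstoD(2)) auto
  then obtain n where n: "measure M (A n) < measure M {x..} + \<epsilon>"
    by (auto simp: eventually_sequentially)
  show ?thesis
  proof (intro exI[of _ "1 / (real n + 1)"] conjI allI impI)
    show "1 / (real n + 1) > 0" by simp
    fix y assume "x - 1 / (real n + 1) < y"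
    then have "{y..} \<subseteq> A n" by (auto simp: A_def)
    then have "measure M {y..} \<le> measure M (A n)" using rng by (intro finite_measure_mono) auto
    then show "measure M {y..} \<le> measure M {x..} + \<epsilon>" using n by simp
  qed
qed

lemma tail_RC:
  assumes "prob_on_nonneg M" "\<epsilon> > 0"
  shows "\<exists>\<delta>>0. \<forall>y. y < x + \<delta> \<longrightarrow> measure M {x<..} - \<epsilon> \<le> measure M {y..}"
proof -
  interpret prob_space M using pon_prob[OF assms(1)] .
  define A where "A n = {x + 1 / (real n + 1)..}" for n :: nat
  have inc: "incseq A" unfolding A_def incseq_def
    by (auto simp: frac_le)
  have rng: "range A \<subseteq> sets M" using pon_borel[OF assms(1)] by (auto simp: A_def)
  have un: "(\<Union>n. A n) = {x<..}"
  proof (auto simp: A_def)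
    fix y assume "x < y"
    then obtain n where "inverse (real (Suc n)) < y - x"
      using reals_Archimedean[of "y - x"] by auto
    then have "1 / (real n + 1) < y - x" by (simp add: inverse_eq_divide add.commute)
    then show "\<exists>n. x + 1 / (real n + 1) \<le> y" by (intro exI[of _ n]) simp
  next
    fix n y assume "x + 1 / (real n + 1) \<le> y" then show "x < y"
    proof -
      have "0 < 1 / (real n + 1)" by simp
      then show ?thesis using \<open>x + 1 / (real n + 1) \<le> y\<close> by linarith
    qed
  qed
  have "(\<lambda>n. measure M (A n)) \<longlonglongrightarrow> measure M {x<..}"
    using finite_Lim_measure_incseq[OF rng inc] un by simp
  then have "eventually (\<lambda>n. measure M (A n) > measure M {x<..} - \<epsilon>) sequentially"
    using assms(2) by (intro order_tendstoD(1)) auto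
  then obtain n where n: "measure M (A n) > measure M {x<..} - \<epsilon>"
    by (auto simp: eventually_sequentially)
  show ?thesis
  proof (intro exI[of _ "1 / (real n + 1)"] conjI allI impI)
    show "1 / (real n + 1) > 0" by simp
    fix y assume "y < x + 1 / (real n + 1)"
    then have "A n \<subseteq> {y..}" by (auto simp: A_def)
    then have "measure M (A n) \<le> measure M {y..}" using pon_borel[OF assms(1)] by (intro finite_measure_mono) auto
    then show "measure M {x<..} - \<epsilon> \<le> measure M {y..}" using n by simp
  qed
qed

lemma AE_pos_exists:
  assumes "AE x in M. Q x" "A \<in> sets M" "emeasure M A > 0"
  shows "\<exists>x\<in>A. Q x"
proof (rule ccontr)
  assume nq: "\<not> (\<exists>x\<in>A. Q x)"
  from assms(1) have "AE x in M. x \<notin> A" by eventually_elim (use nq in auto)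
  then have "emeasure M {x \<in> space M. x \<in> A} = 0" by (intro emeasure_eq_0_AE) simp
  moreover have "{x \<in> space M. x \<in> A} = A" using sets.sets_into_space[OF assms(2)] by auto
  ultimately show False using assms(3) by simp
qed

lemma AE_atom:
  assumes "AE x in M. Q x" "{y} \<in> sets M" "emeasure M {y} > 0"
  shows "Q y"
  using AE_pos_exists[OF assms] by simp

context bl begin

definition "G1 x = measure p1 {x..}"
definition "G2 x = measure p2 {x..}"
definition "G3 x = measure p3 {x..}"
definition "H1 x = measure p1 {x<..}"
definition "H2 x = measure p2 {x<..}"
definition "H3 x = measure p3 {x<..}"

definition "a d = enn2real (\<integral>\<^sup>+s. emeasure p1 {s + d..} \<partial>p2)"
definition "b d = enn2real (\<integral>\<^sup>+r. emeasure p2 {r + d..} \<partial>p1)"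

lemma A_eq: "(\<integral>\<^sup>+s. emeasure p1 {s + d..} \<partial>p2) = ennreal (a d)"
proof -
  have "(\<integral>\<^sup>+s. emeasure p1 {s + d..} \<partial>p2) \<le> (\<integral>\<^sup>+s. 1 \<partial>p2)"
    by (intro nn_integral_mono) (simp add: q1.measure_le_1 q1.emeasure_eq_measure)
  also have "\<dots> = 1" by (simp add: q2.emeasure_space_1[simplified])
  finally show ?thesis unfolding a_def by (intro ennreal_enn2real[symmetric]) (metis ennreal_one_less_top order.strict_trans1)
qed

lemma B_eq: "(\<integral>\<^sup>+r. emeasure p2 {r + d..} \<partial>p1) = ennreal (b d)"
proof -
  have "(\<integral>\<^sup>+r. emeasure p2 {r + d..} \<partial>p1) \<le> (\<integral>\<^sup>+r. 1 \<partial>p1)"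
    by (intro nn_integral_mono) (simp add: q2.measure_le_1 q2.emeasure_eq_measure)
  also have "\<dots> = 1" by (simp add: q1.emeasure_space_1[simplified])
  finally show ?thesis unfolding b_def by (intro ennreal_enn2real[symmetric]) (metis ennreal_one_less_top order.strict_trans1)
qed

lemma a_nn: "a d \<ge> 0" by (simp add: a_def)
lemma b_nn: "b d \<ge> 0" by (simp add: b_def)

lemma tm2: "(\<lambda>s. emeasure p2 {s + d..}) \<in> borel_measurable p1"
  using tail_meas(1)[OF h2, of d] by (simp add: measurable_cong_sets[OF sets1 refl])

lemma AE1:
  assumes d: "d \<ge> 0"
  shows "AE s in p2. G1 (s + d) * a 0 = G1 s * a d"
proof -
  have "AE s in p2. emeasure p1 {s + d..} * (\<integral>\<^sup>+s. emeasure p1 {s + 0..} \<partial>p2)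
      = emeasure p1 {s + 0..} * (\<integral>\<^sup>+s. emeasure p1 {s + d..} \<partial>p2)"
    by (rule ae_density[OF q2.sigma_finite_measure_axioms tm1 tm1, of _ "emeasure p3"])
       (auto simp: D1 d sets2 simp del: add_0_right)
  then show ?thesis
  proof eventually_elim
    case (elim s)
    then show ?case unfolding A_eq
      by (simp add:  q1.emeasure_eq_measure G1_def ennreal_mult''[symmetric] a_nn ennreal_inj
          del: ennreal_mult'')
  qed
qed

lemma AE2:
  assumes d: "d \<ge> 0"
  shows "AE r in p1. G2 (r + d) * b 0 = G2 r * b d"
proof -
  have "AE r in p1. emeasure p2 {r + d..} * (\<integral>\<^sup>+r. emeasure p2 {r + 0..} \<partial>p1)
      = emeasure p2 {r + 0..} * (\<integral>\<^sup>+r. emeasure p2 {r + d..} \<partial>p1)"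
    by (rule ae_density[OF q1.sigma_finite_measure_axioms tm2 tm2, of _ "emeasure p3"])
       (auto simp: D2 d sets1 simp del: add_0_right)
  then show ?thesis
  proof eventually_elim
    case (elim s)
    then show ?case unfolding B_eq
      by (simp add:  q2.emeasure_eq_measure G2_def ennreal_mult''[symmetric] b_nn ennreal_inj
          del: ennreal_mult'')
  qed
qed

lemma R0: "G3 x = G1 x * G2 x"
  using D0[of x] by (simp add: G1_def G2_def G3_def q1.emeasure_eq_measure q2.emeasure_eq_measure
      q3.emeasure_eq_measure ennreal_mult''[symmetric] ennreal_inj del: ennreal_mult'')

lemma R0s: "H3 x = H1 x * H2 x"
  using D0s[of x] by (simp add: H1_def H2_def H3_def q1.emeasure_eq_measure q2.emeasure_eq_measure
      q3.emeasure_eq_measure ennreal_mult''[symmetric] ennreal_inj del: ennreal_mult'')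

end

locale bl2 = bl +
  assumes ne: "msupp p3 \<noteq> {t0}"
begin

lemma S13: "S1 = S3" and S23: "S2 = S3" using supp_struct[OF ne] by auto

lemma Tcases: "(\<lambda>x. x - t0) ` S3 = {0..} \<or> (\<exists>c>0. (\<lambda>x. x - t0) ` S3 = range (\<lambda>n::nat. c * real n))"
  using supp_struct[OF ne] by auto

lemma memS3: "y \<in> S3 \<longleftrightarrow> y - t0 \<in> (\<lambda>x. x - t0) ` S3"
  by (auto intro: image_eqI[of _ _ y])

lemma unb: "\<exists>y\<in>S3. x \<le> y"
  using Tcases
proof
  assume T: "(\<lambda>x. x - t0) ` S3 = {0..}"
  have "max x t0 \<in> S3" using memS3[of "max x t0"] T by auto
  then show ?thesis by (intro bexI[of _ "max x t0"]) auto
next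
  assume "\<exists>c>0. (\<lambda>x. x - t0) ` S3 = range (\<lambda>n::nat. c * real n)"
  then obtain c where c: "c > 0" "(\<lambda>x. x - t0) ` S3 = range (\<lambda>n::nat. c * real n)" by auto
  obtain n where n: "x - t0 < real n * c" using ex_less_of_nat_mult[OF c(1)] by blast
  have "t0 + c * real n \<in> S3" using memS3[of "t0 + c * real n"] c by auto
  then show ?thesis using n by (intro bexI[of _ "t0 + c * real n"]) (auto simp: mult.commute)
qed

lemma low_null:
  assumes "prob_on_nonneg M" "msupp M = S3"
  shows "emeasure M {..<t0} = 0"
proof -
  have "{..<t0} \<subseteq> - msupp M" using assms(2) t0_le by force
  then have "emeasure M {..<t0} \<le> emeasure M (- msupp M)"
    using pon_borel[OF assms(1)] closed_msupp by (intro emeasure_mono) auto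
  then show ?thesis using msupp_compl_null[OF assms(1)] by simp
qed

lemma G1t0: "G1 t0 = 1"
  using fin_measure_compl[OF h1, of t0] low_null[OF h1 S13] by (simp add: G1_def q1.emeasure_eq_measure)
lemma G2t0: "G2 t0 = 1"
  using fin_measure_compl[OF h2, of t0] low_null[OF h2 S23] by (simp add: G2_def q2.emeasure_eq_measure)
lemma G3t0: "G3 t0 = 1"
  using R0[of t0] G1t0 G2t0 by simp

lemma tail_pos:
  assumes "prob_on_nonneg M" "msupp M = S3"
  shows "emeasure M {x..} > 0"
proof -
  obtain y where y: "y \<in> S3" "x + 1 \<le> y" using unb by blast
  have "emeasure M (ball y 1) > 0" using msupp_pos[OF assms(1), of y "ball y 1"] y assms(2) by auto
  also have "emeasure M (ball y 1) \<le> emeasure M {x..}"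
    using y pon_borel[OF assms(1)] by (intro emeasure_mono) (auto simp: dist_real_def)
  finally show ?thesis .
qed

lemma G1pos: "G1 x > 0"
  using tail_pos[OF h1 S13, of x] by (simp add: G1_def q1.emeasure_eq_measure)
lemma G2pos: "G2 x > 0"
  using tail_pos[OF h2 S23, of x] by (simp add: G2_def q2.emeasure_eq_measure)

lemma a0pos: "a 0 > 0"
proof -
  have "emeasure p1 {t0 + 1..} * emeasure p2 {..t0 + 1} = (\<integral>\<^sup>+s. emeasure p1 {t0 + 1..} * indicator {..t0+1} s \<partial>p2)"
    by (simp add: nn_integral_cmult_indicator sets2)
  also have "\<dots> \<le> (\<integral>\<^sup>+s. emeasure p1 {s + 0..} \<partial>p2)"
    by (intro nn_integral_mono) (auto simp: indicator_def intro!: emeasure_mono simp: sets1)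
  also have "\<dots> = ennreal (a 0)" by (rule A_eq)
  finally have le: "emeasure p1 {t0 + 1..} * emeasure p2 {..t0 + 1} \<le> ennreal (a 0)" .
  have p1: "emeasure p1 {t0 + 1..} > 0" using tail_pos[OF h1 S13] .
  have "emeasure p2 (ball t0 1) > 0" using msupp_pos[OF h2, of t0 "ball t0 1"] t0_in S23 by auto
  also have "emeasure p2 (ball t0 1) \<le> emeasure p2 {..t0 + 1}"
    by (intro emeasure_mono) (auto simp: dist_real_def sets2)
  finally have "0 < emeasure p1 {t0 + 1..} * emeasure p2 {..t0 + 1}" using p1 by (simp add: ennreal_zero_less_mult_iff)
  with le have "0 < ennreal (a 0)" by order
  then show ?thesis by simp
qed

lemma b0pos: "b 0 > 0"
proof -
  have "emeasure p2 {t0 + 1..} * emeasure p1 {..t0 + 1} = (\<integral>\<^sup>+s. emeasure p2 {t0 + 1..} * indicator {..t0+1} s \<partial>p1)"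
    by (simp add: nn_integral_cmult_indicator sets1)
  also have "\<dots> \<le> (\<integral>\<^sup>+s. emeasure p2 {s + 0..} \<partial>p1)"
    by (intro nn_integral_mono) (auto simp: indicator_def intro!: emeasure_mono simp: sets2)
  also have "\<dots> = ennreal (b 0)" by (rule B_eq)
  finally have le: "emeasure p2 {t0 + 1..} * emeasure p1 {..t0 + 1} \<le> ennreal (b 0)" .
  have p1: "emeasure p2 {t0 + 1..} > 0" using tail_pos[OF h2 S23] .
  have "emeasure p1 (ball t0 1) > 0" using msupp_pos[OF h1, of t0 "ball t0 1"] t0_in S13 by auto
  also have "emeasure p1 (ball t0 1) \<le> emeasure p1 {..t0 + 1}"
    by (intro emeasure_mono) (auto simp: dist_real_def sets1)
  finally have "0 < emeasure p2 {t0 + 1..} * emeasure p1 {..t0 + 1}" using p1 by (simp add: ennreal_zero_less_mult_iff)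
  with le have "0 < ennreal (b 0)" by order
  then show ?thesis by simp
qed

lemma Ratom1: "measure p2 {t0} = measure p3 {t0} * a 0"
proof -
  have "(\<integral>\<^sup>+s. emeasure p1 {s + 0..} * indicator {t0} s \<partial>p2) = emeasure p3 {t0} * (\<integral>\<^sup>+s. emeasure p1 {s + 0..} \<partial>p2)"
    by (rule D1) auto
  also have "(\<integral>\<^sup>+s. emeasure p1 {s + 0..} * indicator {t0} s \<partial>p2) = (\<integral>\<^sup>+s. emeasure p1 {t0..} * indicator {t0} s \<partial>p2)"
    by (intro nn_integral_cong) (auto simp: indicator_def)
  also have "\<dots> = emeasure p1 {t0..} * emeasure p2 {t0}" by (simp add: nn_integral_cmult_indicator sets2)
  finally have "ennreal (G1 t0) * ennreal (measure p2 {t0}) = ennreal (measure p3 {t0}) * ennreal (a 0)"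
    unfolding A_eq by (simp add: G1_def q1.emeasure_eq_measure q2.emeasure_eq_measure q3.emeasure_eq_measure)
  then show ?thesis using G1t0 a_nn by (simp add: ennreal_mult''[symmetric] ennreal_inj del: ennreal_mult'')
qed

lemma Ratom2: "measure p1 {t0} = measure p3 {t0} * b 0"
proof -
  have "(\<integral>\<^sup>+s. emeasure p2 {s + 0..} * indicator {t0} s \<partial>p1) = emeasure p3 {t0} * (\<integral>\<^sup>+s. emeasure p2 {s + 0..} \<partial>p1)"
    by (rule D2) auto
  also have "(\<integral>\<^sup>+s. emeasure p2 {s + 0..} * indicator {t0} s \<partial>p1) = (\<integral>\<^sup>+s. emeasure p2 {t0..} * indicator {t0} s \<partial>p1)"
    by (intro nn_integral_cong) (auto simp: indicator_def)
  also have "\<dots> = emeasure p2 {t0..} * emeasure p1 {t0}" by (simp add: nn_integral_cmult_indicator sets1)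
  finally have "ennreal (G2 t0) * ennreal (measure p1 {t0}) = ennreal (measure p3 {t0}) * ennreal (b 0)"
    unfolding B_eq by (simp add: G2_def q1.emeasure_eq_measure q2.emeasure_eq_measure q3.emeasure_eq_measure)
  then show ?thesis using G2t0 b_nn by (simp add: ennreal_mult''[symmetric] ennreal_inj del: ennreal_mult'')
qed

end

lemma geom_from_mult:
  fixes f :: "nat \<Rightarrow> real"
  assumes "f 0 = 1" "\<And>n m. f (n + m) = f n * f m"
  shows "f n = f 1 ^ n"
proof (induction n)
  case 0 then show ?case using assms by simp
next
  case (Suc n) then show ?case using assms(2)[of n 1] by simp
qed

context bl2 begin

lemma lattice:
  assumes c: "c > 0" "(\<lambda>x. x - t0) ` S3 = range (\<lambda>n::nat. c * real n)"
  shows "\<exists>l1 l2. 0 < l1 \<and> l1 < 1 \<and> 0 < l2 \<and> l2 < 1 \<and>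
     (\<forall>n::nat. G1 (t0 + c * real n) = l1 ^ n \<and> G2 (t0 + c * real n) = l2 ^ n \<and> G3 (t0 + c * real n) = (l1 * l2) ^ n)"
proof -
  define pt where "pt n = t0 + c * real n" for n :: nat
  have ptS: "pt n \<in> S3" for n using memS3[of "pt n"] c(2) by (auto simp: pt_def)
  have S3pt: "y \<in> S3 \<Longrightarrow> \<exists>m. y = pt m" for y
  proof -
    assume "y \<in> S3"
    then have "y - t0 \<in> range (\<lambda>n::nat. c * real n)" using c(2) by blast
    then obtain m where "y - t0 = c * real m" by auto
    then show ?thesis by (intro exI[of _ m]) (auto simp: pt_def)
  qed
  have iso: "ball (pt n) (c/2) \<subseteq> {pt n} \<union> - S3" for n
  proof
    fix y assume y: "y \<in> ball (pt n) (c/2)"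
    show "y \<in> {pt n} \<union> - S3"
    proof (cases "y \<in> S3")
      case True
      then obtain m where m: "y = pt m" using S3pt by blast
      have "\<bar>c * real m - c * real n\<bar> < c/2" using y m by (auto simp: pt_def dist_real_def abs_minus_commute)
      then have "\<bar>real m - real n\<bar> < 1/2" using c(1)
        by (simp add: right_diff_distrib[symmetric] abs_mult)
      then have "m = n" by linarith
      then show ?thesis using m by simp
    qed simp
  qed
  have atom: "emeasure M {pt n} > 0" if M: "prob_on_nonneg M" "msupp M = S3" for M n
  proof -
    have "0 < emeasure M (ball (pt n) (c/2))"
      using msupp_pos[OF M(1), of "pt n" "ball (pt n) (c/2)"] M(2) ptS c(1) by auto
    also have "\<dots> \<le> emeasure M ({pt n} \<union> - S3)"
      using iso pon_borel[OF M(1)] closed_msupp by (intro emeasure_mono) auto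
    also have "\<dots> \<le> emeasure M {pt n} + emeasure M (- S3)"
      using pon_borel[OF M(1)] closed_msupp by (intro emeasure_subadditive) auto
    also have "emeasure M (- S3) = 0" using msupp_compl_null[OF M(1)] M(2) by simp
    finally show ?thesis by simp
  qed
  have atom1: "measure p1 {pt n} > 0" for n using atom[OF h1 S13, of n] by (simp add: q1.emeasure_eq_measure)
  have atom2: "measure p2 {pt n} > 0" for n using atom[OF h2 S23, of n] by (simp add: q2.emeasure_eq_measure)
  have pt0: "pt 0 = t0" by (simp add: pt_def)
  have e1: "G1 (pt n + d) * a 0 = G1 (pt n) * a d" if "d \<ge> 0" for n d
    by (rule AE_atom[OF AE1[OF that]]) (use atom[OF h2 S23, of n] in \<open>auto simp: sets2\<close>)
  have e2: "G2 (pt n + d) * b 0 = G2 (pt n) * b d" if "d \<ge> 0" for n d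
    by (rule AE_atom[OF AE2[OF that]]) (use atom[OF h1 S13, of n] in \<open>auto simp: sets1\<close>)
  have m1: "G1 (pt n + d) = G1 (pt n) * G1 (t0 + d)" if "d \<ge> 0" for n d
  proof -
    have "G1 (t0 + d) * a 0 = a d" using e1[OF that, of 0] by (simp add: pt0 G1t0)
    then have "G1 (pt n + d) * a 0 = (G1 (pt n) * G1 (t0 + d)) * a 0" using e1[OF that, of n] by simp
    then show ?thesis using a0pos by simp
  qed
  have m2: "G2 (pt n + d) = G2 (pt n) * G2 (t0 + d)" if "d \<ge> 0" for n d
  proof -
    have "G2 (t0 + d) * b 0 = b d" using e2[OF that, of 0] by (simp add: pt0 G2t0)
    then have "G2 (pt n + d) * b 0 = (G2 (pt n) * G2 (t0 + d)) * b 0" using e2[OF that, of n] by simp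
    then show ?thesis using b0pos by simp
  qed
  have ptadd: "pt (n + m) = pt n + c * real m" for n m by (simp add: pt_def algebra_simps)
  have mm1: "G1 (pt (n + m)) = G1 (pt n) * G1 (pt m)" for n m
  proof -
    have "G1 (pt (n + m)) = G1 (pt n + c * real m)" by (simp add: ptadd)
    also have "\<dots> = G1 (pt n) * G1 (t0 + c * real m)" using m1[of "c * real m" n] c(1) by simp
    finally show ?thesis by (simp add: pt_def)
  qed
  have g1: "G1 (pt n) = G1 (pt 1) ^ n" for n
    by (rule geom_from_mult[of "\<lambda>n. G1 (pt n)"]) (use mm1 in \<open>auto simp: pt0 G1t0\<close>)
  have mm2: "G2 (pt (n + m)) = G2 (pt n) * G2 (pt m)" for n m
  proof -
    have "G2 (pt (n + m)) = G2 (pt n + c * real m)" by (simp add: ptadd)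
    also have "\<dots> = G2 (pt n) * G2 (t0 + c * real m)" using m2[of "c * real m" n] c(1) by simp
    finally show ?thesis by (simp add: pt_def)
  qed
  have g2: "G2 (pt n) = G2 (pt 1) ^ n" for n
    by (rule geom_from_mult[of "\<lambda>n. G2 (pt n)"]) (use mm2 in \<open>auto simp: pt0 G2t0\<close>)
  have lt1: "G1 (pt 1) < 1"
  proof -
    have "measure p1 {pt 0} \<le> measure p1 {..<pt 1}"
      using c(1) by (intro q1.finite_measure_mono) (auto simp: pt_def sets1)
    then show ?thesis using atom1[of 0] fin_measure_compl[OF h1, of "pt 1"] by (simp add: G1_def)
  qed
  have lt2: "G2 (pt 1) < 1"
  proof -
    have "measure p2 {pt 0} \<le> measure p2 {..<pt 1}"
      using c(1) by (intro q2.finite_measure_mono) (auto simp: pt_def sets2)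
    then show ?thesis using atom2[of 0] fin_measure_compl[OF h2, of "pt 1"] by (simp add: G2_def)
  qed
  show ?thesis
    using g1 g2 lt1 lt2 G1pos G2pos R0
    by (intro exI[of _ "G1 (pt 1)"] exI[of _ "G2 (pt 1)"]) (auto simp: pt_def power_mult_distrib)
qed

end

lemma add_mult_nat:
  assumes add: "\<And>u v. u \<ge> 0 \<Longrightarrow> v \<ge> 0 \<Longrightarrow> g (u + v) = g u + (g v::real)" and g0: "g 0 = 0" and u: "u \<ge> 0"
  shows "g (real n * u) = real n * g u"
proof (induction n)
  case 0 then show ?case using g0 by simp
next
  case (Suc n)
  have "g (real (Suc n) * u) = g (real n * u + u)" by (simp add: algebra_simps)
  also have "\<dots> = g (real n * u) + g u" using u by (intro add) auto
  finally show ?case using Suc by (simp add: algebra_simps)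
qed

lemma additive_linear:
  fixes g :: "real \<Rightarrow> real"
  assumes add: "\<And>u v. u \<ge> 0 \<Longrightarrow> v \<ge> 0 \<Longrightarrow> g (u + v) = g u + g v"
    and mono: "\<And>u v. 0 \<le> u \<Longrightarrow> u \<le> v \<Longrightarrow> g u \<le> g v"
    and t: "t \<ge> 0"
  shows "g t = t * g 1"
proof -
  have g0: "g 0 = 0" using add[of 0 0] by simp
  have g1: "g 1 \<ge> 0" using mono[of 0 1] g0 by simp
  have frac: "g (real k / real N) = real k * g 1 / real N" if N: "N > 0" for k N :: nat
  proof -
    have "g 1 = g (real N * (1 / real N))" using N by simp
    also have "\<dots> = real N * g (1 / real N)" using add_mult_nat[OF add g0, of "1 / real N" N] by simp
    finally have a: "g (1 / real N) = g 1 / real N" using N by (simp add: field_simps)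
    have "g (real k / real N) = g (real k * (1 / real N))" by simp
    also have "\<dots> = real k * g (1 / real N)" using add_mult_nat[OF add g0, of "1 / real N" k] by simp
    finally show ?thesis using a by simp
  qed
  have bnd: "\<bar>g t - t * g 1\<bar> \<le> g 1 / real N" if N: "N > 0" for N :: nat
  proof -
    define k where "k = nat \<lfloor>real N * t\<rfloor>"
    have k1: "real k \<le> real N * t" using t by (simp add: k_def)
    have k2: "real N * t < real k + 1" using t by (simp add: k_def)
    have l1: "real k / real N \<le> t" using k1 N by (simp add: field_simps)
    have l2: "t \<le> real (k + 1) / real N" using k2 N by (simp add: field_simps)
    have "g (real k / real N) \<le> g t" using l1 by (intro mono) auto
    then have A: "real k * g 1 / real N \<le> g t" using frac[OF N] by simp
    have "g t \<le> g (real (k + 1) / real N)" using l2 t by (intro mono) auto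
    then have B: "g t \<le> real (k + 1) * g 1 / real N" using frac[OF N, of "k + 1"] by simp
    have C: "real k / real N * g 1 \<le> t * g 1" using l1 g1 by (intro mult_right_mono) auto
    have D: "t * g 1 \<le> real (k + 1) / real N * g 1" using l2 g1 by (intro mult_right_mono) auto
    have E: "real (k + 1) * g 1 / real N = real k * g 1 / real N + g 1 / real N"
      by (simp add: add_divide_distrib algebra_simps)
    show ?thesis using A B C D E by (simp add: abs_le_iff)
  qed
  show ?thesis
  proof (rule ccontr)
    assume ne: "g t \<noteq> t * g 1"
    define e where "e = \<bar>g t - t * g 1\<bar>"
    have e: "e > 0" using ne by (simp add: e_def)
    obtain N :: nat where N: "g 1 / e < real N" using reals_Archimedean2 by blast
    have Np: "N > 0" using N g1 e by (metis divide_nonneg_pos gr0I not_less of_nat_0)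
    have "e \<le> g 1 / real N" using bnd[OF Np] by (simp add: e_def)
    moreover have "g 1 / real N < e" using N e Np by (simp add: field_simps)
    ultimately show False by simp
  qed
qed

lemma cauchy_exp:
  fixes f :: "real \<Rightarrow> real"
  assumes pos: "\<And>u. u \<ge> 0 \<Longrightarrow> f u > 0"
    and mult: "\<And>u v. u \<ge> 0 \<Longrightarrow> v \<ge> 0 \<Longrightarrow> f (u + v) = f u * f v"
    and anti: "\<And>u v. 0 \<le> u \<Longrightarrow> u \<le> v \<Longrightarrow> f v \<le> f u"
    and lt: "f 1 < 1"
  shows "\<exists>\<alpha>>0. \<forall>t\<ge>0. f t = exp (- \<alpha> * t)"
proof -
  define g where "g u = - ln (f u)" for u
  have add: "g (u + v) = g u + g v" if "u \<ge> 0" "v \<ge> 0" for u v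
    using that pos[of u] pos[of v] by (simp add: g_def mult ln_mult)
  have mono: "g u \<le> g v" if "0 \<le> u" "u \<le> v" for u v
    using that anti[OF that] pos[of u] pos[of v] by (simp add: g_def)
  have g1: "g 1 > 0" using lt pos[of 1] by (simp add: g_def)
  show ?thesis
  proof (intro exI[of _ "g 1"] conjI allI impI)
    show "g 1 > 0" by (rule g1)
    fix t :: real assume t: "t \<ge> 0"
    have "g t = t * g 1" by (rule additive_linear[OF add mono t]) auto
    then have "ln (f t) = - g 1 * t" by (simp add: g_def)
    then show "f t = exp (- g 1 * t)" using pos[OF t] by (metis exp_ln)
  qed
qed

lemma le_eps:
  fixes u v K :: real
  assumes "\<And>\<epsilon>. \<epsilon> > 0 \<Longrightarrow> u \<le> v + K * \<epsilon>" "K \<ge> 0"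
  shows "u \<le> v"
proof (rule field_le_epsilon)
  fix e :: real assume e: "e > 0"
  have "u \<le> v + K * (e / (K + 1))" using assms(1)[of "e / (K + 1)"] e assms(2) by simp
  also have "K * (e / (K + 1)) \<le> e" using e assms(2) by (simp add: field_simps)
  finally show "u \<le> v + e" by simp
qed

locale contg =
  fixes Ma Mb :: "real measure" and t0 :: real and kap :: "real \<Rightarrow> real"
  assumes ha: "prob_on_nonneg Ma" and hb: "prob_on_nonneg Mb"
    and sb: "msupp Mb = {t0..}"
    and good: "\<And>d. d \<ge> 0 \<Longrightarrow> AE s in Mb. measure Ma {s + d..} = kap d * measure Ma {s..}"
    and kap_nn: "\<And>d. kap d \<ge> 0"
    and posG: "\<And>x. measure Ma {x..} > 0"
begin

sublocale qa: prob_space Ma using pon_prob[OF ha] .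

abbreviation "G x \<equiv> measure Ma {x..}"
abbreviation "H x \<equiv> measure Ma {x<..}"

lemma anti: "x \<le> y \<Longrightarrow> G y \<le> G x"
  by (intro qa.finite_measure_mono) (auto simp: pon_sets[OF ha])
lemma GH: "x < y \<Longrightarrow> G y \<le> H x"
  by (intro qa.finite_measure_mono) (auto simp: pon_sets[OF ha])
lemma HG: "y < x \<Longrightarrow> H x \<le> G y"
  by (intro qa.finite_measure_mono) (auto simp: pon_sets[OF ha])

lemma good_ex:
  assumes d: "d \<ge> 0" and ab: "t0 \<le> \<alpha>" "\<alpha> < \<beta>"
  shows "\<exists>s. \<alpha> < s \<and> s < \<beta> \<and> G (s + d) = kap d * G s"
proof -
  have m: "(\<alpha> + \<beta>) / 2 \<in> msupp Mb" using sb ab by auto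
  have "emeasure Mb {\<alpha><..<\<beta>} > 0" using msupp_pos[OF hb m] ab by auto
  then obtain s where "s \<in> {\<alpha><..<\<beta>}" "G (s + d) = kap d * G s"
    using AE_pos_exists[OF good[OF d], of "{\<alpha><..<\<beta>}"] pon_sets[OF hb] by auto
  then show ?thesis by auto
qed

lemma C1:
  assumes x: "x > t0" and d: "d \<ge> 0"
  shows "G (x + d) = kap d * G x"
proof (rule antisym)
  show "G (x + d) \<le> kap d * G x"
  proof (rule le_eps[OF _ kap_nn])
    fix \<epsilon> :: real assume e: "\<epsilon> > 0"
    obtain \<delta> where \<delta>: "\<delta> > 0" "\<And>y. x - \<delta> < y \<Longrightarrow> G y \<le> G x + \<epsilon>" using tail_LC[OF ha e, of x] by auto
    obtain s where s: "max t0 (x - \<delta>) < s" "s < x" "G (s + d) = kap d * G s"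
      using good_ex[OF d, of "max t0 (x - \<delta>)" x] x \<delta>(1) by auto
    have "G (x + d) \<le> G (s + d)" using s by (intro anti) auto
    also have "\<dots> = kap d * G s" using s by simp
    also have "\<dots> \<le> kap d * (G x + \<epsilon>)" using \<delta>(2)[of s] s kap_nn[of d] by (intro mult_left_mono) auto
    finally show "G (x + d) \<le> kap d * G x + kap d * \<epsilon>" by (simp add: algebra_simps)
  qed
  show "kap d * G x \<le> G (x + d)"
  proof (rule le_eps[of _ _ 1])
    fix \<epsilon> :: real assume e: "\<epsilon> > 0"
    obtain \<delta> where \<delta>: "\<delta> > 0" "\<And>y. x + d - \<delta> < y \<Longrightarrow> G y \<le> G (x + d) + \<epsilon>" using tail_LC[OF ha e, of "x + d"] by auto
    obtain s where s: "max t0 (x - \<delta>) < s" "s < x" "G (s + d) = kap d * G s"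
      using good_ex[OF d, of "max t0 (x - \<delta>)" x] x \<delta>(1) by auto
    have "kap d * G x \<le> kap d * G s" using s kap_nn[of d] by (intro mult_left_mono anti) auto
    also have "\<dots> = G (s + d)" using s by simp
    also have "\<dots> \<le> G (x + d) + \<epsilon>" using \<delta>(2)[of "s + d"] s by auto
    finally show "kap d * G x \<le> G (x + d) + 1 * \<epsilon>" by simp
  qed simp
qed

lemma C2:
  assumes x: "x \<ge> t0" and d: "d \<ge> 0"
  shows "H (x + d) = kap d * H x"
proof (rule antisym)
  show "kap d * H x \<le> H (x + d)"
  proof (rule le_eps[OF _ kap_nn])
    fix \<epsilon> :: real assume e: "\<epsilon> > 0"
    obtain \<delta> where \<delta>: "\<delta> > 0" "\<And>y. y < x + \<delta> \<Longrightarrow> H x - \<epsilon> \<le> G y" using tail_RC[OF ha e, of x] by auto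
    obtain s where s: "x < s" "s < x + \<delta>" "G (s + d) = kap d * G s"
      using good_ex[OF d, of x "x + \<delta>"] x \<delta>(1) by auto
    have "kap d * (H x - \<epsilon>) \<le> kap d * G s" using \<delta>(2)[of s] s kap_nn[of d] by (intro mult_left_mono) auto
    also have "\<dots> = G (s + d)" using s by simp
    also have "\<dots> \<le> H (x + d)" using s by (intro GH) auto
    finally show "kap d * H x \<le> H (x + d) + kap d * \<epsilon>" by (simp add: algebra_simps)
  qed
  show "H (x + d) \<le> kap d * H x"
  proof (rule le_eps[of _ _ 1])
    fix \<epsilon> :: real assume e: "\<epsilon> > 0"
    obtain \<delta> where \<delta>: "\<delta> > 0" "\<And>y. y < x + d + \<delta> \<Longrightarrow> H (x + d) - \<epsilon> \<le> G y" using tail_RC[OF ha e, of "x + d"] by auto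
    obtain s where s: "x < s" "s < x + \<delta>" "G (s + d) = kap d * G s"
      using good_ex[OF d, of x "x + \<delta>"] x \<delta>(1) by auto
    have "H (x + d) - \<epsilon> \<le> G (s + d)" using \<delta>(2)[of "s + d"] s by auto
    also have "\<dots> = kap d * G s" using s by simp
    also have "\<dots> \<le> kap d * H x" using s kap_nn[of d] by (intro mult_left_mono GH) auto
    finally show "H (x + d) \<le> kap d * H x + 1 * \<epsilon>" by simp
  qed simp
qed

lemma J_eq: "measure Ma {y} = G y - H y"
  using fin_measure_split[OF ha, of y] by simp

lemma C3:
  assumes x: "x > t0"
  shows "measure Ma {x} = 0"
proof (rule ccontr)
  assume "measure Ma {x} \<noteq> 0"
  then have j: "measure Ma {x} > 0" by (simp add: zero_less_measure_iff)
  define j where "j = measure Ma {x}"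
  define k where "k = G (x + 1) / G x"
  have kpos: "k > 0" using posG[of x] posG[of "x+1"] by (simp add: k_def)
  have Jd: "measure Ma {x + d} \<ge> k * j" if d: "0 \<le> d" "d \<le> 1" for d
  proof -
    have "measure Ma {x + d} = kap d * (G x - H x)"
      using C1[OF x d(1)] C2[of x d] x d J_eq[of "x + d"] by (simp add: right_diff_distrib)
    also have "\<dots> = kap d * j" using J_eq[of x] by (simp add: j_def)
    finally have e: "measure Ma {x + d} = kap d * j" .
    have "kap d = G (x + d) / G x" using C1[OF x d(1)] posG[of x] by simp
    also have "\<dots> \<ge> k" unfolding k_def using posG[of x] d by (intro divide_right_mono anti) auto
    finally show ?thesis using e j by (simp add: j_def mult_right_mono)
  qed
  obtain N :: nat where N: "1 / (k * j) < real N" using reals_Archimedean2 by blast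
  have "0 < 1 / (k * j)" using kpos j by (simp add: j_def)
  then have "real N > 0" using N by linarith
  then have Np: "N > 0" by simp
  define F where "F = (\<lambda>i. x + real i / real N) ` {..<N}"
  have inj: "inj_on (\<lambda>i. x + real i / real N) {..<N}" using Np by (auto simp: inj_on_def)
  have "measure Ma F = (\<Sum>y\<in>F. measure Ma {y})"
    by (rule measure_eq_sum_singleton) (auto simp: F_def pon_sets[OF ha])
  also have "\<dots> = (\<Sum>i<N. measure Ma {x + real i / real N})"
    unfolding F_def by (rule sum.reindex[OF inj, unfolded comp_def])
  also have "\<dots> \<ge> (\<Sum>i<N. k * j)"
    using Np by (intro sum_mono Jd) (auto simp: field_simps)
  finally have "real N * (k * j) \<le> measure Ma F" by simp
  moreover have "real N * (k * j) > 1" using N kpos j by (simp add: field_simps j_def)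
  moreover have "measure Ma F \<le> 1" by (rule qa.prob_le_1)
  ultimately show False by simp
qed

end

context bl2 begin

lemma cont_case:
  assumes T: "(\<lambda>x. x - t0) ` S3 = {0..}"
  shows "\<exists>\<alpha>1 \<alpha>2. \<alpha>1 > 0 \<and> \<alpha>2 > 0 \<and> (\<forall>t\<ge>0. G1 (t0 + t) = exp (- \<alpha>1 * t) \<and> G2 (t0 + t) = exp (- \<alpha>2 * t)
      \<and> G3 (t0 + t) = exp (- (\<alpha>1 + \<alpha>2) * t))"
proof -
  have S3e: "S3 = {t0..}"
  proof
    show "S3 \<subseteq> {t0..}" using t0_le by auto
    show "{t0..} \<subseteq> S3"
    proof
      fix y assume "y \<in> {t0..}"
      then have "y - t0 \<in> (\<lambda>x. x - t0) ` S3" using T by auto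
      then show "y \<in> S3" using memS3 by blast
    qed
  qed
  define kap1 where "kap1 d = a d / a 0" for d
  define kap2 where "kap2 d = b d / b 0" for d
  interpret c1: contg p1 p2 t0 kap1
  proof
    show "prob_on_nonneg p1" "prob_on_nonneg p2" by (rule h1, rule h2)
    show "msupp p2 = {t0..}" using S23 S3e by simp
    show "kap1 d \<ge> 0" for d using a_nn a0pos by (simp add: kap1_def)
    show "measure p1 {x..} > 0" for x using G1pos by (simp add: G1_def)
    fix d :: real assume d: "d \<ge> 0"
    from AE1[OF d] show "AE s in p2. measure p1 {s + d..} = kap1 d * measure p1 {s..}"
    proof eventually_elim
      case (elim s) then show ?case using a0pos by (simp add: G1_def kap1_def field_simps)
    qed
  qed
  interpret c2: contg p2 p1 t0 kap2
  proof
    show "prob_on_nonneg p2" "prob_on_nonneg p1" by (rule h2, rule h1)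
    show "msupp p1 = {t0..}" using S13 S3e by simp
    show "kap2 d \<ge> 0" for d using b_nn b0pos by (simp add: kap2_def)
    show "measure p2 {x..} > 0" for x using G2pos by (simp add: G2_def)
    fix d :: real assume d: "d \<ge> 0"
    from AE2[OF d] show "AE s in p1. measure p2 {s + d..} = kap2 d * measure p2 {s..}"
    proof eventually_elim
      case (elim s) then show ?case using b0pos by (simp add: G2_def kap2_def field_simps)
    qed
  qed
  define j1 where "j1 = measure p1 {t0}"
  define j2 where "j2 = measure p2 {t0}"
  define j3 where "j3 = measure p3 {t0}"
  have H1t0: "H1 t0 = 1 - j1" using fin_measure_split[OF h1, of t0] G1t0 by (simp add: G1_def H1_def j1_def)
  have H2t0: "H2 t0 = 1 - j2" using fin_measure_split[OF h2, of t0] G2t0 by (simp add: G2_def H2_def j2_def)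
  have H3t0: "H3 t0 = 1 - j3" using fin_measure_split[OF h3, of t0] G3t0 by (simp add: G3_def H3_def j3_def)
  have j3e: "j3 = j1 + j2 * (1 - j1)" using R0s[of t0] H1t0 H2t0 H3t0 by (simp add: algebra_simps)
  have j1r: "0 \<le> j1" "j1 \<le> 1" by (auto simp: j1_def)
  have j2r: "0 \<le> j2" "j2 \<le> 1" by (auto simp: j2_def)
  have "j2 * (1 - j1) \<ge> 0" "j1 * (1 - j2) \<ge> 0" using j1r j2r by auto
  then have j3a: "j3 \<ge> j1" "j3 \<ge> j2" using j3e by (auto simp: algebra_simps)
  have j2e: "j2 = j3 * a 0" using Ratom1 by (simp add: j2_def j3_def)
  have j1e: "j1 = j3 * b 0" using Ratom2 by (simp add: j1_def j3_def)
  have j1z: "j1 = 0"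
  proof (rule ccontr)
    assume "j1 \<noteq> 0"
    then have j1p: "j1 > 0" using j1r by simp
    then have "j2 > 0" using j3a j2e a0pos by simp
    then have at: "emeasure p2 {t0} > 0" by (simp add: j2_def q2.emeasure_eq_measure)
    have "G1 (t0 + 1) * a 0 = G1 t0 * a 1"
      by (rule AE_atom[OF AE1]) (use at in \<open>auto simp: sets2\<close>)
    then have g: "G1 (t0 + 1) = kap1 1" using G1t0 a0pos by (simp add: kap1_def field_simps)
    have "H1 (t0 + 1) = kap1 1 * H1 t0" using c1.C2[of t0 1] by (simp add: H1_def)
    moreover have "G1 (t0 + 1) = H1 (t0 + 1)" using c1.C3[of "t0 + 1"] c1.J_eq[of "t0 + 1"] by (simp add: G1_def H1_def)
    ultimately have "kap1 1 * j1 = 0" using g H1t0 by (simp add: algebra_simps)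
    then have "G1 (t0 + 1) = 0" using g j1p by simp
    then show False using G1pos[of "t0 + 1"] by simp
  qed
  have j2z: "j2 = 0"
  proof (rule ccontr)
    assume "j2 \<noteq> 0"
    then have "j2 > 0" using j2r by simp
    then have "j1 > 0" using j3a j1e b0pos by simp
    then show False using j1z by simp
  qed
  have k1: "G1 (t0 + d) = kap1 d" if d: "d \<ge> 0" for d
  proof (cases "d = 0")
    case True then show ?thesis using G1t0 a0pos by (simp add: kap1_def)
  next
    case False
    have "H1 (t0 + d) = kap1 d * H1 t0" using c1.C2[of t0 d] d by (simp add: H1_def)
    moreover have "G1 (t0 + d) = H1 (t0 + d)" using c1.C3[of "t0 + d"] c1.J_eq[of "t0 + d"] d False
      by (simp add: G1_def H1_def)
    ultimately show ?thesis using H1t0 j1z by simp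
  qed
  have k2: "G2 (t0 + d) = kap2 d" if d: "d \<ge> 0" for d
  proof (cases "d = 0")
    case True then show ?thesis using G2t0 b0pos by (simp add: kap2_def)
  next
    case False
    have "H2 (t0 + d) = kap2 d * H2 t0" using c2.C2[of t0 d] d by (simp add: H2_def)
    moreover have "G2 (t0 + d) = H2 (t0 + d)" using c2.C3[of "t0 + d"] c2.J_eq[of "t0 + d"] d False
      by (simp add: G2_def H2_def)
    ultimately show ?thesis using H2t0 j2z by simp
  qed
  have e1: "\<exists>\<alpha>>0. \<forall>t\<ge>0. G1 (t0 + t) = exp (- \<alpha> * t)"
  proof (rule cauchy_exp)
    show "G1 (t0 + u) > 0" for u using G1pos .
    show "G1 (t0 + (u + v)) = G1 (t0 + u) * G1 (t0 + v)" if "u \<ge> 0" "v \<ge> 0" for u v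
    proof (cases "u = 0")
      case True then show ?thesis using G1t0 by simp
    next
      case False
      then have "G1 (t0 + u + v) = kap1 v * G1 (t0 + u)" using c1.C1[of "t0 + u" v] that by (simp add: G1_def)
      then show ?thesis using k1[OF that(2)] by (simp add: add.assoc mult.commute)
    qed
    show "G1 (t0 + v) \<le> G1 (t0 + u)" if "0 \<le> u" "u \<le> v" for u v
      using c1.anti[of "t0 + u" "t0 + v"] that by (simp add: G1_def)
    have "t0 + 1/2 \<in> S1" using S13 S3e by simp
    then have "emeasure p1 (ball (t0 + 1/2) (1/2)) > 0" using msupp_pos[OF h1] by auto
    also have "emeasure p1 (ball (t0 + 1/2) (1/2)) \<le> emeasure p1 {..<t0 + 1}"
    proof (rule emeasure_mono)
      show "ball (t0 + 1/2) (1/2) \<subseteq> {..<t0 + 1}"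
      proof
        fix x assume "x \<in> ball (t0 + 1/2) (1/2)"
        then have "\<bar>t0 + 1/2 - x\<bar> < 1/2" by (simp add: dist_real_def)
        then have "x < t0 + 1" by arith
        then show "x \<in> {..<t0 + 1}" by simp
      qed
    qed (simp add: sets1)
    finally have "measure p1 {..<t0 + 1} > 0" by (simp add: q1.emeasure_eq_measure)
    then show "G1 (t0 + 1) < 1" using fin_measure_compl[OF h1, of "t0 + 1"] by (simp add: G1_def)
  qed
  have e2: "\<exists>\<alpha>>0. \<forall>t\<ge>0. G2 (t0 + t) = exp (- \<alpha> * t)"
  proof (rule cauchy_exp)
    show "G2 (t0 + u) > 0" for u using G2pos .
    show "G2 (t0 + (u + v)) = G2 (t0 + u) * G2 (t0 + v)" if "u \<ge> 0" "v \<ge> 0" for u v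
    proof (cases "u = 0")
      case True then show ?thesis using G2t0 by simp
    next
      case False
      then have "G2 (t0 + u + v) = kap2 v * G2 (t0 + u)" using c2.C1[of "t0 + u" v] that by (simp add: G2_def)
      then show ?thesis using k2[OF that(2)] by (simp add: add.assoc mult.commute)
    qed
    show "G2 (t0 + v) \<le> G2 (t0 + u)" if "0 \<le> u" "u \<le> v" for u v
      using c2.anti[of "t0 + u" "t0 + v"] that by (simp add: G2_def)
    have "t0 + 1/2 \<in> S2" using S23 S3e by simp
    then have "emeasure p2 (ball (t0 + 1/2) (1/2)) > 0" using msupp_pos[OF h2] by auto
    also have "emeasure p2 (ball (t0 + 1/2) (1/2)) \<le> emeasure p2 {..<t0 + 1}"
    proof (rule emeasure_mono)
      show "ball (t0 + 1/2) (1/2) \<subseteq> {..<t0 + 1}"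
      proof
        fix x assume "x \<in> ball (t0 + 1/2) (1/2)"
        then have "\<bar>t0 + 1/2 - x\<bar> < 1/2" by (simp add: dist_real_def)
        then have "x < t0 + 1" by arith
        then show "x \<in> {..<t0 + 1}" by simp
      qed
    qed (simp add: sets2)
    finally have "measure p2 {..<t0 + 1} > 0" by (simp add: q2.emeasure_eq_measure)
    then show "G2 (t0 + 1) < 1" using fin_measure_compl[OF h2, of "t0 + 1"] by (simp add: G2_def)
  qed
  obtain \<alpha>1 where a1: "\<alpha>1 > 0" "\<And>t. t \<ge> 0 \<Longrightarrow> G1 (t0 + t) = exp (- \<alpha>1 * t)" using e1 by auto
  obtain \<alpha>2 where a2: "\<alpha>2 > 0" "\<And>t. t \<ge> 0 \<Longrightarrow> G2 (t0 + t) = exp (- \<alpha>2 * t)" using e2 by auto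
  have "G3 (t0 + t) = exp (- (\<alpha>1 + \<alpha>2) * t)" if t: "t \<ge> 0" for t
  proof -
    have "G3 (t0 + t) = exp (- \<alpha>1 * t) * exp (- \<alpha>2 * t)" using R0[of "t0 + t"] a1(2)[OF t] a2(2)[OF t] by simp
    also have "\<dots> = exp (- (\<alpha>1 + \<alpha>2) * t)" by (simp add: exp_add[symmetric] algebra_simps)
    finally show ?thesis .
  qed
  then show ?thesis using a1 a2 by blast
qed

end

lemma zero_ne_nonneg: "{0::real} \<noteq> {0..}"
proof
  assume e: "{0::real} = {0..}"
  have "(1::real) \<in> {0..}" by simp
  then have "(1::real) \<in> {0}" by (subst e)
  then show False by simp
qed

lemma range_ne_0: "c > 0 \<Longrightarrow> range (\<lambda>n::nat. c * real n) \<noteq> {0}"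
proof
  assume "c > 0" "range (\<lambda>n::nat. c * real n) = {0}"
  then have "c * real (1::nat) \<in> {0}" by blast
  then show False using \<open>c > 0\<close> by simp
qed

lemma range_ne_nonneg: "c > 0 \<Longrightarrow> range (\<lambda>n::nat. c * real n) \<noteq> {0..}"
proof
  assume c: "c > 0" and e: "range (\<lambda>n::nat. c * real n) = {0..}"
  have "c / 2 \<in> {0..}" using c by simp
  then have "c / 2 \<in> range (\<lambda>n::nat. c * real n)" using e by simp
  then obtain n :: nat where "c / 2 = c * real n" by auto
  then have "real n = 1 / 2" using c by (simp add: field_simps)
  then show False by (cases n) auto
qed

lemma (in bl) main_bl:
  defines tz_def: "tz \<equiv> Inf (msupp p3)"
  defines U1_def: "U1 \<equiv> (\<lambda>x. x - tz) ` msupp p1"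
      and U2_def: "U2 \<equiv> (\<lambda>x. x - tz) ` msupp p2"
      and U3_def: "U3 \<equiv> (\<lambda>x. x - tz) ` msupp p3"
  defines F1_def: "F1 \<equiv> (\<lambda>t. measure p1 {tz + t..})"
      and F2_def: "F2 \<equiv> (\<lambda>t. measure p2 {tz + t..})"
      and F3_def: "F3 \<equiv> (\<lambda>t. measure p3 {tz + t..})"
  defines C1_def: "C1 \<equiv> (U3 = {0})"
  defines C2_def: "C2 \<equiv> (U1 = {0..} \<and> U2 = {0..} \<and> U3 = {0..} \<and>
              (\<exists>\<alpha>1 \<alpha>2. \<alpha>1 > 0 \<and> \<alpha>2 > 0 \<and>
                 (\<forall>t\<ge>0. F1 t = exp (- \<alpha>1 * t) \<and> F2 t = exp (- \<alpha>2 * t)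
                          \<and> F3 t = exp (- (\<alpha>1 + \<alpha>2) * t))))"
  defines C3_def: "C3 \<equiv> (\<exists>c>0. U1 = range (\<lambda>n::nat. c * real n) \<and> U2 = range (\<lambda>n::nat. c * real n)
              \<and> U3 = range (\<lambda>n::nat. c * real n) \<and>
              (\<exists>l1 l2. 0 < l1 \<and> l1 < 1 \<and> 0 < l2 \<and> l2 < 1 \<and>
                 (\<forall>n::nat. F1 (c * real n) = l1 ^ n \<and> F2 (c * real n) = l2 ^ n
                          \<and> F3 (c * real n) = (l1 * l2) ^ n)))"
  shows "(C1 \<and> \<not> C2 \<and> \<not> C3) \<or> (\<not> C1 \<and> C2 \<and> \<not> C3) \<or> (\<not> C1 \<and> \<not> C2 \<and> C3)"
proof -
  have tz: "tz = t0" by (simp add: tz_def t0_def)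
  have Fe: "F1 t = G1 (t0 + t)" "F2 t = G2 (t0 + t)" "F3 t = G3 (t0 + t)" for t
    by (simp_all add: F1_def F2_def F3_def G1_def G2_def G3_def tz)
  have U3e: "U3 = (\<lambda>x. x - t0) ` S3" by (simp add: U3_def tz)
  show ?thesis
  proof (cases "S3 = {t0}")
    case True
    then have U3: "U3 = {0}" using U3e by simp
    have "\<not> C2" unfolding C2_def using U3 zero_ne_nonneg by simp
    moreover have "\<not> C3"
    proof
      assume C3 then obtain c where "c > 0" "U3 = range (\<lambda>n::nat. c * real n)" unfolding C3_def by blast
      then show False using U3 range_ne_0[of c] by simp
    qed
    ultimately show ?thesis using U3 by (simp add: C1_def)
  next
    case False
    interpret bl2 p1 p2 p3 using False by unfold_locales
    have U1e: "U1 = (\<lambda>x. x - t0) ` S3" by (simp add: U1_def tz S13)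
    have U2e: "U2 = (\<lambda>x. x - t0) ` S3" by (simp add: U2_def tz S23)
    from Tcases show ?thesis
    proof
      assume T: "(\<lambda>x. x - t0) ` S3 = {0..}"
      obtain \<alpha>1 \<alpha>2 where a: "\<alpha>1 > 0" "\<alpha>2 > 0"
        "\<forall>t\<ge>0. G1 (t0 + t) = exp (- \<alpha>1 * t) \<and> G2 (t0 + t) = exp (- \<alpha>2 * t)
           \<and> G3 (t0 + t) = exp (- (\<alpha>1 + \<alpha>2) * t)" using cont_case[OF T] by blast
      have c2: "C2" unfolding C2_def using a T U1e U2e U3e Fe by auto
      have "\<not> C1" unfolding C1_def using T U3e zero_ne_nonneg by simp
      moreover have "\<not> C3"
      proof
        assume C3 then obtain c where "c > 0" "U3 = range (\<lambda>n::nat. c * real n)" unfolding C3_def by blast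
        then show False using T U3e range_ne_nonneg[of c] by simp
      qed
      ultimately show ?thesis using c2 by simp
    next
      assume "\<exists>c>0. (\<lambda>x. x - t0) ` S3 = range (\<lambda>n::nat. c * real n)"
      then obtain c where c: "c > 0" "(\<lambda>x. x - t0) ` S3 = range (\<lambda>n::nat. c * real n)" by blast
      obtain l1 l2 where l: "0 < l1" "l1 < 1" "0 < l2" "l2 < 1"
        "\<forall>n::nat. G1 (t0 + c * real n) = l1 ^ n \<and> G2 (t0 + c * real n) = l2 ^ n \<and> G3 (t0 + c * real n) = (l1 * l2) ^ n"
        using lattice[OF c] by blast
      have c3: "C3" unfolding C3_def
        using c l U1e U2e U3e Fe by (intro exI[of _ c] conjI exI[of _ l1] exI[of _ l2]) auto
      have "\<not> C1" unfolding C1_def using c U3e range_ne_0[of c] by simp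
      moreover have "\<not> C2" unfolding C2_def using c U3e range_ne_nonneg[of c] by simp
      ultimately show ?thesis using c3 by simp
    qed
  qed
qed

theorem mainTheorem1:
  fixes \<pi>1 \<pi>2 \<pi>3 :: "real measure"
  assumes h1: "prob_on_nonneg \<pi>1" and h2: "prob_on_nonneg \<pi>2" and h3: "prob_on_nonneg \<pi>3"
  assumes hR: "distr (\<pi>1 \<Otimes>\<^sub>M (\<pi>2 \<Otimes>\<^sub>M \<pi>3)) (\<pi>1 \<Otimes>\<^sub>M (\<pi>2 \<Otimes>\<^sub>M \<pi>3)) Rmap
               = \<pi>1 \<Otimes>\<^sub>M (\<pi>2 \<Otimes>\<^sub>M \<pi>3)"
  defines "t0 \<equiv> Inf (msupp \<pi>3)"
  defines "U1 \<equiv> (\<lambda>x. x - t0) ` msupp \<pi>1"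
      and "U2 \<equiv> (\<lambda>x. x - t0) ` msupp \<pi>2"
      and "U3 \<equiv> (\<lambda>x. x - t0) ` msupp \<pi>3"
  defines "F1 \<equiv> (\<lambda>t. measure \<pi>1 {t0 + t..})"
      and "F2 \<equiv> (\<lambda>t. measure \<pi>2 {t0 + t..})"
      and "F3 \<equiv> (\<lambda>t. measure \<pi>3 {t0 + t..})"
  defines "C1 \<equiv> (U3 = {0})"
  defines "C2 \<equiv> (U1 = {0..} \<and> U2 = {0..} \<and> U3 = {0..} \<and>
              (\<exists>\<alpha>1 \<alpha>2. \<alpha>1 > 0 \<and> \<alpha>2 > 0 \<and>
                 (\<forall>t\<ge>0. F1 t = exp (- \<alpha>1 * t) \<and> F2 t = exp (- \<alpha>2 * t)
                          \<and> F3 t = exp (- (\<alpha>1 + \<alpha>2) * t))))"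
  defines "C3 \<equiv> (\<exists>c>0. U1 = range (\<lambda>n::nat. c * real n) \<and> U2 = range (\<lambda>n::nat. c * real n)
              \<and> U3 = range (\<lambda>n::nat. c * real n) \<and>
              (\<exists>l1 l2. 0 < l1 \<and> l1 < 1 \<and> 0 < l2 \<and> l2 < 1 \<and>
                 (\<forall>n::nat. F1 (c * real n) = l1 ^ n \<and> F2 (c * real n) = l2 ^ n
                          \<and> F3 (c * real n) = (l1 * l2) ^ n)))"
  shows "(C1 \<and> \<not> C2 \<and> \<not> C3) \<or> (\<not> C1 \<and> C2 \<and> \<not> C3) \<or> (\<not> C1 \<and> \<not> C2 \<and> C3)"
proof -
  interpret bl \<pi>1 \<pi>2 \<pi>3 using h1 h2 h3 hR by unfold_locales
  show ?thesis using main_bl by (simp only: assms)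
qed

end
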